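(* Let $N\ge 3$ and let $D_N$ be the directed graph on the $2N$ vertices $(i,n)$, $i\in\{1,\dots,N\}$, $n\in\{0,1\}$ (indices $i$ taken cyclically, $N+1\equiv 1$, $0\equiv N$), whose arcs are exactly: $(1,0)\to(1,1)$; $(i,0)\to(i-1,0)$ for $2\le i\le N-1$; $(N,0)\to(1,0)$; and, for every $i$, $(i,1)\to(i+1,1)$, $(i,1)\to(i-1,1)$, $(i,1)\to(i,0)$. For a vertex $x$ let $|M(x)|$ denote the number of in-trees of $D_N$ rooted at $x$. Let $b_1=3$, $b_2=8$, $b_n=3b_{n-1}-b_{n-2}$ for $n\ge 3$ (so $b_n$ is the determinant of the $n\times n$ tridiagonal matrix with $3$ on the diagonal and $-1$ on the two adjacent diagonals). Then $$|M((1,1))|=b_{N-1},\qquad |M((2,1))|=b_{N-2}+1,\qquad |M((2,0))|=2b_{N-1}-3b_{N-2}-3,$$ and consequently $|M((2,1))|+|M((2,0))|-|M((1,1))|=b_{N-1}-2b_{N-2}-2$, which equals $0$ for $N=3$ and is strictly positive for every $N\ge 4$.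
   Context: An in-tree of a directed graph rooted at a vertex $x$ is a spanning subgraph in which every vertex other than $x$ has exactly one outgoing arc, $x$ has none, and there are no directed cycles (so following arcs from any vertex leads to $x$). The digraph $D_N$ is the digraph of preferred transitions of a flashing-ratchet Markov jump process: two rings of $N$ states, outer ring ($n=0$) with rates $\lambda((i,0),(i\pm1,0))=e^{\frac\beta2(E_i-E_{i\pm1})}$ for energies $E_1<\dots<E_N$, inner ring ($n=1$) with all nearest-neighbour rates equal to $1$, and rates $1$ between $(i,0)$ and $(i,1)$; the quantity $|M((2,1))|+|M((2,0))|-|M((1,1))|$ is, up to the normalization, the leading low-temperature value of the clockwise ratchet current in that model. *)

theory Defs
  imports Main
begin

definition DV :: "nat \<Rightarrow> (nat \<times> nat) set" where
  "DV N = {1..N} \<times> {0,1}"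

definition csuc :: "nat \<Rightarrow> nat \<Rightarrow> nat" where
  "csuc N i = (if i = N then 1 else i + 1)"

definition cpred :: "nat \<Rightarrow> nat \<Rightarrow> nat" where
  "cpred N i = (if i = 1 then N else i - 1)"

definition DA :: "nat \<Rightarrow> ((nat \<times> nat) \<times> (nat \<times> nat)) set" where
  "DA N =
     {((1,0),(1,1))}
   \<union> {((i,0),(i - 1,0)) | i. 2 \<le> i \<and> i \<le> N - 1}
   \<union> {((N,0),(1,0))}
   \<union> {((i,1),(csuc N i,1)) | i. 1 \<le> i \<and> i \<le> N}
   \<union> {((i,1),(cpred N i,1)) | i. 1 \<le> i \<and> i \<le> N}
   \<union> {((i,1),(i,0)) | i. 1 \<le> i \<and> i \<le> N}"

definition is_in_tree :: "'a set \<Rightarrow> ('a \<times> 'a) set \<Rightarrow> 'a \<Rightarrow> ('a \<times> 'a) set \<Rightarrow> bool" where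
  "is_in_tree V A x T \<longleftrightarrow>
     T \<subseteq> A \<and>
     (\<forall>v\<in>V. v \<noteq> x \<longrightarrow> (\<exists>!w. (v, w) \<in> T)) \<and>
     (\<forall>w. (x, w) \<notin> T) \<and>
     acyclic T"

definition numM :: "nat \<Rightarrow> nat \<times> nat \<Rightarrow> nat" where
  "numM N x = card {T. is_in_tree (DV N) (DA N) x T}"

text \<open>b_1 = 3, b_2 = 8, b_n = 3 b_(n-1) - b_(n-2); b 0 = 1 is only an auxiliary
  seed consistent with the recursion (3*3 - 1 = 8) and is never used below.\<close>
fun b :: "nat \<Rightarrow> int" where
  "b 0 = 1"
| "b (Suc 0) = 3"
| "b (Suc (Suc n)) = 3 * b (Suc n) - b n"

end

theory Submission
  imports Defs
begin


definition tgt :: "nat \<Rightarrow> nat \<Rightarrow> nat \<Rightarrow> nat \<times> nat" where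
  "tgt N i k = (if k = 0 then (i,0) else if k = 1 then (cpred N i, 1) else (csuc N i, 1))"

definition onx :: "nat \<Rightarrow> nat \<Rightarrow> nat \<times> nat" where
  "onx N i = (if i = 1 then (1,1) else if i = N then (1,0) else (i - 1, 0))"

definition Tw :: "nat \<Rightarrow> nat \<times> nat \<Rightarrow> nat list \<Rightarrow> ((nat \<times> nat) \<times> (nat \<times> nat)) set" where
  "Tw N r ws = {((i,0), onx N i) | i. 1 \<le> i \<and> i \<le> N \<and> (i,0) \<noteq> r}
     \<union> {((i,1), tgt N i (ws!(i-1))) | i. 1 \<le> i \<and> i \<le> N \<and> (i,1) \<noteq> r}"

lemma Tw_mem: "(((i,n),w) \<in> Tw N r ws) \<longleftrightarrow> 1 \<le> i \<and> i \<le> N \<and> (i,n) \<noteq> r \<and>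
   ((n = 0 \<and> w = onx N i) \<or> (n = 1 \<and> w = tgt N i (ws!(i-1))))"
  unfolding Tw_def by auto

lemma DA_mem: assumes "N \<ge> 3"
  shows "(((i,n),w) \<in> DA N) \<longleftrightarrow> 1 \<le> i \<and> i \<le> N \<and>
   ((n = 0 \<and> w = onx N i) \<or> (n = 1 \<and> (w = (i,0) \<or> w = (cpred N i,1) \<or> w = (csuc N i,1))))"
  using assms unfolding DA_def onx_def by auto

lemma csuc_ne_cpred: "N \<ge> 3 \<Longrightarrow> 1 \<le> i \<Longrightarrow> i \<le> N \<Longrightarrow> csuc N i \<noteq> cpred N i"
  unfolding csuc_def cpred_def by auto

lemma tgt_inj: "N \<ge> 3 \<Longrightarrow> 1 \<le> i \<Longrightarrow> i \<le> N \<Longrightarrow> k \<le> 2 \<Longrightarrow> k' \<le> 2 \<Longrightarrow>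
   tgt N i k = tgt N i k' \<Longrightarrow> k = k'"
  using csuc_ne_cpred[of N i] unfolding tgt_def by (auto split: if_splits)

lemma det_cycle:
  assumes sv: "\<And>v w w'. (v,w)\<in>T \<Longrightarrow> (v,w')\<in>T \<Longrightarrow> w=w'"
  and "(x,y) \<in> T\<^sup>*" and "(x,x) \<in> T\<^sup>+"
  shows "(y,y) \<in> T\<^sup>+"
  using assms(2,3)
proof (induction rule: rtrancl_induct)
  case base then show ?case by simp
next
  case (step y z)
  then have "(y,y) \<in> T\<^sup>+" by simp
  then obtain w where "(y,w) \<in> T" "(w,y) \<in> T\<^sup>*" using tranclD by metis
  with sv step(2) have "w = z" by blast
  with \<open>(w,y) \<in> T\<^sup>*\<close> step(2) show ?case
    by (meson rtrancl_into_trancl1)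
qed

lemma reach_acyclic:
  assumes sv: "\<And>v w w'. (v,w)\<in>T \<Longrightarrow> (v,w')\<in>T \<Longrightarrow> w=w'"
  and nr: "\<And>w. (r,w) \<notin> T"
  and re: "\<And>v w. (v,w)\<in>T \<Longrightarrow> (v,r)\<in>T\<^sup>*"
  shows "acyclic T"
  unfolding acyclic_def
proof (intro allI notI)
  fix x assume c: "(x,x) \<in> T\<^sup>+"
  then obtain u where "(x,u) \<in> T" using tranclD by metis
  then have "(x,r) \<in> T\<^sup>*" using re by blast
  moreover have "\<forall>v w w'. (v,w)\<in>T \<longrightarrow> (v,w')\<in>T \<longrightarrow> w=w'" using sv by blast
  ultimately have "(r,r) \<in> T\<^sup>+" using det_cycle[of T x r] c by blast
  then obtain u where "(r,u) \<in> T" using tranclD by metis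
  with nr show False by blast
qed

definition W :: "nat \<Rightarrow> nat \<times> nat \<Rightarrow> nat list set" where
  "W N r = {ws. length ws = N \<and> set ws \<subseteq> {0,1,2} \<and> (snd r = 1 \<longrightarrow> ws!(fst r - 1) = 0)}"

lemma Tw_sv: assumes "(v,w) \<in> Tw N r ws" "(v,w') \<in> Tw N r ws" shows "w = w'"
proof -
  obtain i n where v: "v = (i,n)" by (cases v)
  show ?thesis using assms unfolding v Tw_mem by auto
qed

lemma Tw_in_tree:
  assumes N: "N \<ge> 3" and ac: "acyclic (Tw N r ws)"
  shows "is_in_tree (DV N) (DA N) r (Tw N r ws)"
  unfolding is_in_tree_def
proof (intro conjI ballI impI allI)
  show "Tw N r ws \<subseteq> DA N"
  proof
    fix e assume "e \<in> Tw N r ws"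
    then obtain i n w where e: "e = ((i,n),w)" by (metis prod.exhaust)
    show "e \<in> DA N" using \<open>e \<in> Tw N r ws\<close> unfolding e Tw_mem DA_mem[OF N] tgt_def
      by (auto split: if_splits)
  qed
  fix v assume "v \<in> DV N" "v \<noteq> r"
  then obtain i n where v: "v = (i,n)" "1 \<le> i" "i \<le> N" "n = 0 \<or> n = 1" unfolding DV_def by auto
  show "\<exists>!w. (v,w) \<in> Tw N r ws"
    using v \<open>v \<noteq> r\<close> by (cases "n = 0") (simp_all add: Tw_mem)
next
  fix w show "(r,w) \<notin> Tw N r ws" by (cases r) (auto simp: Tw_mem)
qed (fact ac)

lemma in_tree_Tw:
  assumes N: "N \<ge> 3" and r: "r \<in> DV N" and T: "is_in_tree (DV N) (DA N) r T"
  shows "\<exists>ws \<in> W N r. T = Tw N r ws"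
proof -
  define f where "f i = (if (i,1) = r then 0 else if ((i,1),(i,0)) \<in> T then 0
      else if ((i,1),(cpred N i,1)) \<in> T then 1 else (2::nat))" for i
  define ws where "ws = map f [1..<N+1]"
  have wsi: "ws!(i-1) = f i" if "1 \<le> i" "i \<le> N" for i
    using that unfolding ws_def by (simp del: upt_Suc)
  have TA: "T \<subseteq> DA N" and un: "\<And>v. v\<in>DV N \<Longrightarrow> v \<noteq> r \<Longrightarrow> \<exists>!w. (v,w)\<in>T"
    and nr: "\<And>w. (r,w) \<notin> T"
    using T unfolding is_in_tree_def by auto
  have sub: "e \<in> Tw N r ws" if "e \<in> T" for e
  proof -
    obtain i n w where e: "e = ((i,n),w)" by (metis prod.exhaust)
    have DAe: "((i,n),w) \<in> DA N" using TA that e by auto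
    then have i: "1 \<le> i" "i \<le> N" using DA_mem[OF N] by auto
    have vr: "(i,n) \<noteq> r" using nr[of w] that e by auto
    have vD: "(i,n) \<in> DV N" using DAe DA_mem[OF N] unfolding DV_def by auto
    have uq: "\<And>w'. ((i,n),w') \<in> T \<Longrightarrow> w' = w" using un[OF vD vr] that e by auto
    show ?thesis
    proof (cases "n = 0")
      case True
      then show ?thesis using DAe DA_mem[OF N] i vr e by (simp add: Tw_mem)
    next
      case False
      then have n1: "n = 1" and wc: "w = (i,0) \<or> w = (cpred N i,1) \<or> w = (csuc N i,1)"
        using DAe DA_mem[OF N] by auto
      have "w = tgt N i (f i)"
      proof -
        have cs: "csuc N i \<noteq> cpred N i" using csuc_ne_cpred[OF N i] .
        have ir: "(i,1) \<noteq> r" using vr n1 by simp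
        have T0: "((i,1),w) \<in> T" using that e n1 by simp
        have uq1: "\<And>w'. ((i,1),w') \<in> T \<Longrightarrow> w' = w" using uq n1 by simp
        consider "w = (i,0)" | "w = (cpred N i,1)" | "w = (csuc N i,1)" using wc by blast
        then show ?thesis
        proof cases
          case 1 then show ?thesis using T0 ir unfolding f_def tgt_def by simp
        next
          case 2
          then have "((i,1),(i,0)) \<notin> T" using uq1 by fastforce
          then show ?thesis using T0 ir 2 unfolding f_def tgt_def by simp
        next
          case 3
          then have "((i,1),(i,0)) \<notin> T" using uq1 by fastforce
          moreover have "((i,1),(cpred N i,1)) \<notin> T" using uq1 3 cs by fastforce
          ultimately show ?thesis using ir 3 unfolding f_def tgt_def by simp
        qed
      qed
      then show ?thesis using e i vr n1 wsi[OF i] by (simp add: Tw_mem)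
    qed
  qed
  have "T = Tw N r ws"
  proof
    show "T \<subseteq> Tw N r ws" using sub by blast
    show "Tw N r ws \<subseteq> T"
    proof
      fix e assume "e \<in> Tw N r ws"
      obtain i n w where e: "e = ((i,n),w)" by (metis prod.exhaust)
      have h: "1 \<le> i" "i \<le> N" "(i,n) \<noteq> r" "n = 0 \<or> n = 1"
        using \<open>e \<in> Tw N r ws\<close> unfolding e Tw_mem by auto
      then have "(i,n) \<in> DV N" unfolding DV_def by auto
      then obtain w' where w': "((i,n),w') \<in> T" using un h(3) by blast
      then have "((i,n),w') \<in> Tw N r ws" using sub by blast
      then have "w' = w" using Tw_sv \<open>e \<in> Tw N r ws\<close> e by blast
      then show "e \<in> T" using w' e by simp
    qed
  qed
  moreover have "ws \<in> W N r"
  proof -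
    have "length ws = N" unfolding ws_def by simp
    moreover have "set ws \<subseteq> {0,1,2}" unfolding ws_def f_def by auto
    moreover have "snd r = 1 \<longrightarrow> ws!(fst r - 1) = 0"
    proof
      assume "snd r = 1"
      show "ws!(fst r - 1) = 0"
      proof -
        have "1 \<le> fst r \<and> fst r \<le> N" using r unfolding DV_def by auto
        then show ?thesis using wsi[of "fst r"] \<open>snd r = 1\<close> unfolding f_def
          by (cases r) auto
      qed
    qed
    ultimately show ?thesis unfolding W_def by simp
  qed
  ultimately show ?thesis by blast
qed

lemma nth_le2: "set ws \<subseteq> {0,1,2::nat} \<Longrightarrow> j < length ws \<Longrightarrow> ws!j \<le> 2"
proof -
  assume a: "set ws \<subseteq> {0,1,2::nat}" "j < length ws"
  then have "ws!j \<in> {0,1,2}" using nth_mem[of j ws] by blast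
  then show ?thesis by auto
qed

lemma Tw_inj:
  assumes N: "N \<ge> 3" shows "inj_on (Tw N r) (W N r)"
proof
  fix ws ws' assume a: "ws \<in> W N r" "ws' \<in> W N r" and eq: "Tw N r ws = Tw N r ws'"
  have l: "length ws = N" "length ws' = N" using a unfolding W_def by auto
  show "ws = ws'"
  proof (rule nth_equalityI)
    show "length ws = length ws'" using l by simp
    fix j assume "j < length ws"
    then have j: "1 \<le> Suc j" "Suc j \<le> N" using l by auto
    have b: "ws!j \<le> 2" "ws'!j \<le> 2" using a \<open>j < length ws\<close> l nth_le2 unfolding W_def
      by auto
    show "ws!j = ws'!j"
    proof (cases "(Suc j,1) = r")
      case True
      then show ?thesis using a unfolding W_def by auto
    next
      case False
      have "((Suc j,1), tgt N (Suc j) (ws!j)) \<in> Tw N r ws" using j False by (simp add: Tw_mem)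
      then have "((Suc j,1), tgt N (Suc j) (ws!j)) \<in> Tw N r ws'" using eq by simp
      then have "tgt N (Suc j) (ws!j) = tgt N (Suc j) (ws'!j)" by (simp add: Tw_mem)
      then show ?thesis using tgt_inj[OF N j b] by simp
    qed
  qed
qed

lemma numM_W:
  assumes N: "N \<ge> 3" and r: "r \<in> DV N"
  shows "numM N r = card {ws \<in> W N r. acyclic (Tw N r ws)}"
proof -
  have "{T. is_in_tree (DV N) (DA N) r T} = Tw N r ` {ws \<in> W N r. acyclic (Tw N r ws)}"
  proof
    show "{T. is_in_tree (DV N) (DA N) r T} \<subseteq> Tw N r ` {ws \<in> W N r. acyclic (Tw N r ws)}"
    proof
      fix T assume "T \<in> {T. is_in_tree (DV N) (DA N) r T}"
      then have T: "is_in_tree (DV N) (DA N) r T" by simp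
      then obtain ws where "ws \<in> W N r" "T = Tw N r ws" using in_tree_Tw[OF N r] by blast
      moreover have "acyclic T" using T unfolding is_in_tree_def by simp
      ultimately show "T \<in> Tw N r ` {ws \<in> W N r. acyclic (Tw N r ws)}" by blast
    qed
    show "Tw N r ` {ws \<in> W N r. acyclic (Tw N r ws)} \<subseteq> {T. is_in_tree (DV N) (DA N) r T}"
      using Tw_in_tree[OF N] by blast
  qed
  moreover have "inj_on (Tw N r) {ws \<in> W N r. acyclic (Tw N r ws)}"
    using Tw_inj[OF N] by (rule inj_on_subset) blast
  ultimately show ?thesis unfolding numM_def by (simp add: card_image)
qed



definition noRL :: "nat \<Rightarrow> nat \<Rightarrow> nat list \<Rightarrow> bool" where
  "noRL a c ws \<longleftrightarrow> (\<forall>i. a \<le> i \<and> i < c \<longrightarrow> \<not> (ws!(i-1) = 2 \<and> ws!i = 1))"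

definition okw :: "nat list \<Rightarrow> bool" where
  "okw u \<longleftrightarrow> set u \<subseteq> {0,1,2} \<and> noRL 1 (length u) u"

definition OK :: "nat \<Rightarrow> nat list set" where
  "OK n = {u. length u = n \<and> okw u}"

lemma finite_OK: "finite (OK n)"
proof -
  have "OK n \<subseteq> {u. set u \<subseteq> {0,1,2} \<and> length u = n}" unfolding OK_def okw_def by auto
  moreover have "finite {u. set u \<subseteq> {0,1,2::nat} \<and> length u = n}"
    by (rule finite_lists_length_eq) simp
  ultimately show ?thesis by (rule finite_subset)
qed

lemma noRL_Cons: "a \<ge> 1 \<Longrightarrow> noRL (Suc a) (Suc c) (x#u) \<longleftrightarrow> noRL a c u"
  unfolding noRL_def
proof (intro iffI allI impI)
  fix i assume h: "\<forall>i. Suc a \<le> i \<and> i < Suc c \<longrightarrow> \<not> ((x # u) ! (i - 1) = 2 \<and> (x # u) ! i = 1)"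
    and "1 \<le> a" "a \<le> i \<and> i < c"
  then show "\<not> (u ! (i - 1) = 2 \<and> u ! i = 1)" using h[rule_format, of "Suc i"]
    by (cases i) auto
next
  fix i assume h: "\<forall>i. a \<le> i \<and> i < c \<longrightarrow> \<not> (u ! (i - 1) = 2 \<and> u ! i = 1)"
    and "1 \<le> a" "Suc a \<le> i \<and> i < Suc c"
  then show "\<not> ((x # u) ! (i - 1) = 2 \<and> (x # u) ! i = 1)" using h[rule_format, of "i - 1"]
    by (cases i) (auto simp: nth_Cons split: nat.splits)
qed

lemma noRL_split: "a \<le> m \<Longrightarrow> m \<le> c \<Longrightarrow> noRL a c ws \<longleftrightarrow> noRL a m ws \<and> noRL m c ws"
  unfolding noRL_def
proof safe
  fix i assume "a \<le> m" "m \<le> c" and h1: "\<forall>i. a \<le> i \<and> i < m \<longrightarrow> \<not> (ws ! (i - 1) = 2 \<and> ws ! i = 1)"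
    and h2: "\<forall>i. m \<le> i \<and> i < c \<longrightarrow> \<not> (ws ! (i - 1) = 2 \<and> ws ! i = 1)"
    and "a \<le> i" "i < c" "ws ! (i - 1) = 2" "ws ! i = 1"
  then show False by (cases "i < m") auto
qed auto

lemma okw_Cons: "okw (x#u) \<longleftrightarrow> x \<in> {0,1,2} \<and> okw u \<and> (x = 2 \<longrightarrow> u = [] \<or> hd u \<noteq> 1)"
proof (cases u)
  case Nil
  then show ?thesis unfolding okw_def noRL_def by auto
next
  case (Cons y v)
  have e: "noRL 1 (Suc (length u)) (x#u) \<longleftrightarrow> noRL 1 2 (x#u) \<and> noRL 2 (Suc (length u)) (x#u)"
    by (rule noRL_split) (auto simp: Cons)
  have e2: "noRL 2 (Suc (length u)) (x#u) \<longleftrightarrow> noRL 1 (length u) u"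
    using noRL_Cons[of 1 "length u" x u] by (simp add: numeral_2_eq_2)
  have e1: "noRL 1 2 (x#u) \<longleftrightarrow> (x = 2 \<longrightarrow> u = [] \<or> hd u \<noteq> 1)"
    unfolding noRL_def Cons by (auto simp: numeral_2_eq_2 le_Suc_eq)
  show ?thesis unfolding okw_def using e e1 e2 by auto
qed


lemma OK_Suc: "OK (Suc n) = Cons 0 ` OK n \<union> Cons 1 ` OK n \<union> Cons 2 ` {u\<in>OK n. u = [] \<or> hd u \<noteq> 1}"
proof
  show "OK (Suc n) \<subseteq> Cons 0 ` OK n \<union> Cons 1 ` OK n \<union> Cons 2 ` {u\<in>OK n. u = [] \<or> hd u \<noteq> 1}"
  proof
    fix w assume "w \<in> OK (Suc n)"
    then obtain x u where w: "w = x#u" "length u = n" "okw (x#u)" unfolding OK_def by (cases w) auto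
    then show "w \<in> Cons 0 ` OK n \<union> Cons 1 ` OK n \<union> Cons 2 ` {u\<in>OK n. u = [] \<or> hd u \<noteq> 1}"
      unfolding okw_Cons OK_def by auto
  qed
  show "Cons 0 ` OK n \<union> Cons 1 ` OK n \<union> Cons 2 ` {u\<in>OK n. u = [] \<or> hd u \<noteq> 1} \<subseteq> OK (Suc n)"
    unfolding OK_def by (auto simp: okw_Cons)
qed

lemma OK_hd1: "{u\<in>OK (Suc n). hd u = 1} = Cons 1 ` OK n"
proof
  show "{u\<in>OK (Suc n). hd u = 1} \<subseteq> Cons 1 ` OK n"
  proof
    fix w assume "w \<in> {u\<in>OK (Suc n). hd u = 1}"
    then obtain x u where w: "w = x#u" "length u = n" "okw (x#u)" "x = 1" unfolding OK_def by (cases w) auto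
    then show "w \<in> Cons 1 ` OK n" unfolding okw_Cons OK_def by auto
  qed
  show "Cons 1 ` OK n \<subseteq> {u\<in>OK (Suc n). hd u = 1}"
    unfolding OK_def by (auto simp: okw_Cons)
qed

lemma card_Cons_img: "card (Cons k ` A) = card A"
  by (rule card_image) (simp add: inj_on_def)

lemma card_OK_hd1: "card {u\<in>OK (Suc n). hd u = 1} = card (OK n)"
  unfolding OK_hd1 card_Cons_img ..

lemma card_OK_nhd1: "card {u\<in>OK (Suc n). u = [] \<or> hd u \<noteq> 1} = card (OK (Suc n)) - card (OK n)"
proof -
  have "{u\<in>OK (Suc n). u = [] \<or> hd u \<noteq> 1} = OK (Suc n) - {u\<in>OK (Suc n). hd u = 1}"
    unfolding OK_def by auto
  then show ?thesis using card_OK_hd1[of n] finite_OK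
    by (simp add: card_Diff_subset)
qed

lemma card_OK_le: "card (OK n) \<le> card (OK (Suc n))"
  using card_OK_hd1[of n] finite_OK[of "Suc n"]
  by (metis (no_types, lifting) card_mono mem_Collect_eq subsetI)

lemma card_OK_SS: "card (OK (Suc (Suc n))) = 3 * card (OK (Suc n)) - card (OK n)"
proof -
  let ?A = "Cons 0 ` OK (Suc n)" and ?B = "Cons 1 ` OK (Suc n)"
    and ?C = "Cons 2 ` {u\<in>OK (Suc n). u = [] \<or> hd u \<noteq> 1}"
  have f: "finite ?A" "finite ?B" "finite ?C" using finite_OK by auto
  have "card (OK (Suc (Suc n))) = card (?A \<union> ?B \<union> ?C)" using OK_Suc by metis
  also have "\<dots> = card ?A + card ?B + card ?C"
    using f by (subst card_Un_disjoint; auto)+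
  also have "\<dots> = 3 * card (OK (Suc n)) - card (OK n)"
    unfolding card_Cons_img card_OK_nhd1 using card_OK_le[of n] by simp
  finally show ?thesis .
qed

lemma OK0: "OK 0 = {[]}" unfolding OK_def okw_def noRL_def by auto

lemma card_OK: "int (card (OK n)) = b n"
proof (induction n rule: b.induct)
  case 1 then show ?case by (simp add: OK0)
next
  case 2
  have "OK 1 = {[0],[1],[2]}"
  proof
    show "OK 1 \<subseteq> {[0],[1],[2]}"
    proof
      fix u assume "u \<in> OK 1"
      then obtain x where "u = [x]" "x \<in> {0,1,2}" unfolding OK_def okw_def
        by (cases u) auto
      then show "u \<in> {[0],[1],[2]}" by auto
    qed
    show "{[0],[1],[2]} \<subseteq> OK 1" unfolding OK_def okw_def noRL_def by auto
  qed
  then show ?case by simp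
next
  case (3 n)
  then show ?case using card_OK_SS[of n] card_OK_le[of n] card_OK_le[of "Suc n"] by simp
qed


lemma noRL_append: "c \<le> length u \<Longrightarrow> noRL a c (u@v) \<longleftrightarrow> noRL a c u"
  unfolding noRL_def by (auto simp: nth_append)

lemma okw_snoc: "okw (u@[x]) \<longleftrightarrow> okw u \<and> x \<in> {0,1,2} \<and> (x = 1 \<longrightarrow> u = [] \<or> last u \<noteq> 2)"
proof (cases "u = []")
  case True
  then show ?thesis unfolding okw_def noRL_def by auto
next
  case False
  then have L: "length u \<ge> 1" by (cases u) auto
  have e: "noRL 1 (Suc (length u)) (u@[x]) \<longleftrightarrow> noRL 1 (length u) (u@[x]) \<and> noRL (length u) (Suc (length u)) (u@[x])"
    by (rule noRL_split) (use L in auto)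
  have e1: "noRL 1 (length u) (u@[x]) \<longleftrightarrow> noRL 1 (length u) u" by (rule noRL_append) simp
  have e2: "noRL (length u) (Suc (length u)) (u@[x]) \<longleftrightarrow> (x = 1 \<longrightarrow> last u \<noteq> 2)"
  proof -
    have "(u@[x])!(length u - 1) = last u" using False by (simp add: nth_append last_conv_nth)
    moreover have "(u@[x])!(length u) = x" by simp
    ultimately show ?thesis unfolding noRL_def
      by (metis le_antisym less_Suc_eq_le order_refl)
  qed
  show ?thesis unfolding okw_def using e e1 e2 False by auto
qed

lemma OK_last2: "{u\<in>OK (Suc n). last u = 2} = (\<lambda>u. u@[2]) ` OK n"
proof
  show "{u\<in>OK (Suc n). last u = 2} \<subseteq> (\<lambda>u. u@[2]) ` OK n"
  proof
    fix w assume "w \<in> {u\<in>OK (Suc n). last u = 2}"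
    then obtain x u where w: "w = u@[x]" "length u = n" "okw (u@[x])" "x = 2" unfolding OK_def
      by (cases w rule: rev_cases) auto
    then show "w \<in> (\<lambda>u. u@[2]) ` OK n" unfolding okw_snoc OK_def by auto
  qed
  show "(\<lambda>u. u@[2]) ` OK n \<subseteq> {u\<in>OK (Suc n). last u = 2}"
    unfolding OK_def by (auto simp: okw_snoc)
qed

lemma card_OK_nlast2: "card {u\<in>OK (Suc n). last u \<noteq> 2} = card (OK (Suc n)) - card (OK n)"
proof -
  have "{u\<in>OK (Suc n). last u \<noteq> 2} = OK (Suc n) - {u\<in>OK (Suc n). last u = 2}"
    by auto
  moreover have "card {u\<in>OK (Suc n). last u = 2} = card (OK n)"
    unfolding OK_last2 by (rule card_image) (simp add: inj_on_def)
  ultimately show ?thesis using finite_OK by (simp add: card_Diff_subset)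
qed

lemma card_OK_nhd1': "card {u\<in>OK (Suc n). hd u \<noteq> 1} = card (OK (Suc n)) - card (OK n)"
proof -
  have "{u\<in>OK (Suc n). hd u \<noteq> 1} = {u\<in>OK (Suc n). u = [] \<or> hd u \<noteq> 1}"
    unfolding OK_def by auto
  then show ?thesis using card_OK_nhd1 by simp
qed



lemma cpred_gt1: "2 \<le> i \<Longrightarrow> cpred N i = i - 1" unfolding cpred_def by auto
lemma cpred_1: "cpred N 1 = N" unfolding cpred_def by auto
lemma csuc_lt: "i < N \<Longrightarrow> csuc N i = Suc i" unfolding csuc_def by auto
lemma csuc_N: "csuc N N = 1" unfolding csuc_def by auto

lemma stD: "1 \<le> i \<Longrightarrow> i \<le> N \<Longrightarrow> (i,1) \<noteq> r \<Longrightarrow> ws!(i-1) = 0 \<Longrightarrow> ((i,1),(i,0)) \<in> Tw N r ws"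
  by (simp add: Tw_mem tgt_def)
lemma stL: "1 \<le> i \<Longrightarrow> i \<le> N \<Longrightarrow> (i,1) \<noteq> r \<Longrightarrow> ws!(i-1) = 1 \<Longrightarrow> ((i,1),(cpred N i,1)) \<in> Tw N r ws"
  by (simp add: Tw_mem tgt_def)
lemma stR: "1 \<le> i \<Longrightarrow> i \<le> N \<Longrightarrow> (i,1) \<noteq> r \<Longrightarrow> ws!(i-1) = 2 \<Longrightarrow> ((i,1),(csuc N i,1)) \<in> Tw N r ws"
  by (simp add: Tw_mem tgt_def)
lemma st0: "1 \<le> i \<Longrightarrow> i \<le> N \<Longrightarrow> (i,0) \<noteq> r \<Longrightarrow> ((i,0),onx N i) \<in> Tw N r ws"
  by (simp add: Tw_mem)

lemma chainL: assumes "1 \<le> a" "a \<le> c" "c \<le> N"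
  and "\<And>k. a < k \<Longrightarrow> k \<le> c \<Longrightarrow> (k,1) \<noteq> r \<and> ws!(k-1) = 1"
  shows "((c,1),(a,1)) \<in> (Tw N r ws)\<^sup>*"
  using assms
proof (induction c)
  case 0 then show ?case by simp
next
  case (Suc c)
  show ?case
  proof (cases "a = Suc c")
    case True then show ?thesis by simp
  next
    case False
    then have ac: "a \<le> c" using Suc by simp
    have "((Suc c,1),(c,1)) \<in> Tw N r ws"
      using stL[of "Suc c" N r ws] Suc.prems(4)[of "Suc c"] Suc.prems(1,3) ac cpred_gt1[of "Suc c" N] by auto
    moreover have "((c,1),(a,1)) \<in> (Tw N r ws)\<^sup>*" using Suc ac by auto
    ultimately show ?thesis by (rule converse_rtrancl_into_rtrancl)
  qed
qed

lemma chainR: assumes "1 \<le> a" "a \<le> c" "c \<le> N"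
  and "\<And>k. a \<le> k \<Longrightarrow> k < c \<Longrightarrow> (k,1) \<noteq> r \<and> ws!(k-1) = 2"
  shows "((a,1),(c,1)) \<in> (Tw N r ws)\<^sup>*"
  using assms
proof (induction c)
  case 0 then show ?case by simp
next
  case (Suc c)
  show ?case
  proof (cases "a = Suc c")
    case True then show ?thesis by simp
  next
    case False
    then have ac: "a \<le> c" using Suc by simp
    have "((c,1),(Suc c,1)) \<in> Tw N r ws"
      using stR[of c N r ws] Suc.prems(4)[of c] Suc.prems(1,3) ac csuc_lt[of c N] by auto
    moreover have "((a,1),(c,1)) \<in> (Tw N r ws)\<^sup>*" using Suc ac by auto
    ultimately show ?thesis by (meson rtrancl_into_rtrancl)
  qed
qed

lemma chain0: assumes "1 \<le> a" "a \<le> c" "c < N"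
  and "\<And>k. a < k \<Longrightarrow> k \<le> c \<Longrightarrow> (k,0) \<noteq> r"
  shows "((c,0),(a,0)) \<in> (Tw N r ws)\<^sup>*"
  using assms
proof (induction c)
  case 0 then show ?case by simp
next
  case (Suc c)
  show ?case
  proof (cases "a = Suc c")
    case True then show ?thesis by simp
  next
    case False
    then have ac: "a \<le> c" using Suc by simp
    have "((Suc c,0),(c,0)) \<in> Tw N r ws"
      using st0[of "Suc c" N r ws] Suc.prems ac unfolding onx_def by auto
    moreover have "((c,0),(a,0)) \<in> (Tw N r ws)\<^sup>*" using Suc ac by auto
    ultimately show ?thesis by (rule converse_rtrancl_into_rtrancl)
  qed
qed

lemma outer_to_11: assumes N: "N \<ge> 3" and r: "snd r = 1" and i: "1 \<le> i" "i \<le> N"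
  shows "((i,0),(1,1)) \<in> (Tw N r ws)\<^sup>*"
proof -
  have nr: "(k,0) \<noteq> r" for k using r by auto
  have "((i,0),(1,0)) \<in> (Tw N r ws)\<^sup>*"
  proof (cases "i = N")
    case True
    then have "((i,0),(1,0)) \<in> Tw N r ws" using st0[of N N r ws] nr N unfolding onx_def by auto
    then show ?thesis by simp
  next
    case False
    then show ?thesis using chain0[of 1 i N r ws] i nr by auto
  qed
  moreover have "((1,0),(1,1)) \<in> Tw N r ws" using st0[of 1 N r ws] nr N unfolding onx_def by auto
  ultimately show ?thesis by simp
qed

lemma cyc2: assumes "acyclic T" "(u,v) \<in> T" "(v,u) \<in> T" shows False
proof -
  have "(u,u) \<in> T\<^sup>+" using assms by auto
  then show False using assms(1) unfolding acyclic_def by blast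
qed


lemma W_le2: "ws \<in> W N r \<Longrightarrow> 1 \<le> i \<Longrightarrow> i \<le> N \<Longrightarrow> ws!(i-1) \<le> 2"
  unfolding W_def using nth_le2[of ws "i-1"] by auto

lemma caseA:
  assumes N: "N \<ge> 3" and w: "ws \<in> W N (1,1)"
  shows "acyclic (Tw N (1,1) ws) \<longleftrightarrow> noRL 2 N ws"
proof
  assume ac: "acyclic (Tw N (1,1) ws)"
  show "noRL 2 N ws" unfolding noRL_def
  proof (intro allI impI notI)
    fix i assume i: "2 \<le> i \<and> i < N" and c: "ws ! (i - 1) = 2 \<and> ws ! i = 1"
    have "((i,1),(Suc i,1)) \<in> Tw N (1,1) ws" using stR[of i N "(1,1)" ws] i c csuc_lt[of i N] by auto
    moreover have "((Suc i,1),(i,1)) \<in> Tw N (1,1) ws" using stL[of "Suc i" N "(1,1)" ws] i c cpred_gt1[of "Suc i" N] by auto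
    ultimately show False using cyc2[OF ac] by blast
  qed
next
  assume nr: "noRL 2 N ws"
  let ?T = "Tw N (1,1) ws"
  have P: "1 \<le> k \<Longrightarrow> k \<le> N \<Longrightarrow> k = 1 \<or> ws!(k-1) \<noteq> 2 \<Longrightarrow> ((k,1),(1,1)) \<in> ?T\<^sup>*" for k
  proof (induction k)
    case 0 then show ?case by simp
  next
    case (Suc n)
    show ?case
    proof (cases "n = 0")
      case True then show ?thesis by simp
    next
      case False
      then have h: "ws!n \<noteq> 2" using Suc by auto
      have l2: "ws!n \<le> 2" using W_le2[OF w, of "Suc n"] Suc by simp
      show "((Suc n,1),(1,1)) \<in> ?T\<^sup>*"
      proof (cases "ws!n = 0")
        case True
        then have "((Suc n,1),(Suc n,0)) \<in> ?T" using stD[of "Suc n" N "(1,1)" ws] Suc False by simp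
        moreover have "((Suc n,0),(1,1)) \<in> ?T\<^sup>*" using outer_to_11[OF N] Suc by simp
        ultimately show ?thesis by (rule converse_rtrancl_into_rtrancl)
      next
        case F2: False
        then have L: "ws!n = 1" using h l2 by simp
        have n2: "2 \<le> Suc n" using False by simp
        have "((Suc n,1),(n,1)) \<in> ?T" using stL[of "Suc n" N "(1,1)" ws] Suc.prems L cpred_gt1[OF n2, of N] False by simp
        moreover have "n = 1 \<or> ws!(n-1) \<noteq> 2" using nr L Suc.prems False unfolding noRL_def by auto
        then have "((n,1),(1,1)) \<in> ?T\<^sup>*" using Suc False by simp
        ultimately show ?thesis by (rule converse_rtrancl_into_rtrancl)
      qed
    qed
  qed
  have Q: "2 \<le> k \<Longrightarrow> k \<le> N \<Longrightarrow> ws!(k-1) \<noteq> 1 \<Longrightarrow> ((k,1),(1,1)) \<in> ?T\<^sup>*" for k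
  proof (induction "N - k" arbitrary: k)
    case 0
    then have kN: "k = N" by simp
    have l2: "ws!(N-1) \<le> 2" using W_le2[OF w, of N] N by simp
    show ?case
    proof (cases "ws!(N-1) = 0")
      case True
      then have "((N,1),(N,0)) \<in> ?T" using stD[of N N "(1,1)" ws] N by simp
      moreover have "((N,0),(1,1)) \<in> ?T\<^sup>*" using outer_to_11[OF N] N by simp
      ultimately show ?thesis unfolding kN by (rule converse_rtrancl_into_rtrancl)
    next
      case False
      then have "ws!(N-1) = 2" using 0 l2 kN by simp
      then have "((N,1),(1,1)) \<in> ?T" using stR[of N N "(1,1)" ws] N csuc_N[of N] by simp
      then show ?thesis unfolding kN by simp
    qed
  next
    case (Suc d n)
    then have nN: "n < N" by simp
    have l2: "ws!(n-1) \<le> 2" using W_le2[OF w, of n] Suc by simp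
    show ?case
    proof (cases "ws!(n-1) = 0")
      case True
      then have "((n,1),(n,0)) \<in> ?T" using stD[of n N "(1,1)" ws] Suc by simp
      moreover have "((n,0),(1,1)) \<in> ?T\<^sup>*" using outer_to_11[OF N] Suc by simp
      ultimately show ?thesis by (rule converse_rtrancl_into_rtrancl)
    next
      case False
      then have R: "ws!(n-1) = 2" using Suc.prems l2 by simp
      then have "((n,1),(Suc n,1)) \<in> ?T" using stR[of n N "(1,1)" ws] Suc.prems csuc_lt[OF nN] by simp
      moreover have "ws!(Suc n - 1) \<noteq> 1" using nr R Suc.prems nN unfolding noRL_def by auto
      then have "((Suc n,1),(1,1)) \<in> ?T\<^sup>*" using Suc.hyps(1)[of "Suc n"] Suc.hyps(2) Suc.prems nN by simp
      ultimately show ?thesis by (rule converse_rtrancl_into_rtrancl)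
    qed
  qed
  show "acyclic ?T"
  proof (rule reach_acyclic)
    show "\<And>v w w'. (v,w) \<in> ?T \<Longrightarrow> (v,w') \<in> ?T \<Longrightarrow> w = w'" by (rule Tw_sv)
    show "\<And>w. ((1,1),w) \<notin> ?T" by (simp add: Tw_mem)
    fix v w assume vw: "(v,w) \<in> ?T"
    obtain i n where v: "v = (i,n)" by (cases v)
    have i: "1 \<le> i" "i \<le> N" "n = 0 \<or> n = 1" "(i,n) \<noteq> (1,1)" using vw unfolding v Tw_mem by auto
    show "(v,(1,1)) \<in> ?T\<^sup>*"
    proof (cases "n = 0")
      case True then show ?thesis using outer_to_11[OF N] i v by simp
    next
      case False
      then have n1: "n = 1" using i by simp
      then have "i \<ge> 2" using i by (cases "i = 1") auto
      then have "((i,1),(1,1)) \<in> ?T\<^sup>*"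
        using P[of i] Q[of i] i by (cases "ws!(i-1) = 2") auto
      then show ?thesis using v n1 by simp
    qed
  qed
qed


lemma noRL_Cons2: "noRL 2 (Suc m) (x#u) \<longleftrightarrow> noRL 1 m u"
  using noRL_Cons[of 1 m x u] by (simp add: numeral_2_eq_2)

lemma setA: assumes N: "N \<ge> 3"
  shows "{ws \<in> W N (1,1). noRL 2 N ws} = Cons 0 ` OK (N-1)"
proof
  show "{ws \<in> W N (1,1). noRL 2 N ws} \<subseteq> Cons 0 ` OK (N-1)"
  proof
    fix ws assume "ws \<in> {ws \<in> W N (1,1). noRL 2 N ws}"
    then have w: "length ws = N" "set ws \<subseteq> {0,1,2}" "ws!0 = 0" "noRL 2 N ws" unfolding W_def by auto
    then obtain x u where ws: "ws = x#u" using N by (cases ws) auto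
    have NS: "N = Suc (length u)" using w ws by simp
    have "noRL 2 (Suc (length u)) (x#u)" using w(4) ws NS by simp
    then have "noRL 1 (length u) u" unfolding noRL_Cons2 .
    moreover have "set u \<subseteq> {0,1,2}" using w(2) ws by simp
    ultimately have "u \<in> OK (N-1)" using NS unfolding OK_def okw_def by simp
    moreover have "x = 0" using w(3) ws by simp
    ultimately show "ws \<in> Cons 0 ` OK (N-1)" using ws by blast
  qed
  show "Cons 0 ` OK (N-1) \<subseteq> {ws \<in> W N (1,1). noRL 2 N ws}"
  proof
    fix ws assume "ws \<in> Cons 0 ` OK (N-1)"
    then obtain u where ws: "ws = 0#u" "length u = N - 1" "okw u" unfolding OK_def by auto
    have NS: "N = Suc (length u)" using ws N by simp
    have "noRL 1 (length u) u" using ws(3) unfolding okw_def by simp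
    then have "noRL 2 (Suc (length u)) (0#u)" unfolding noRL_Cons2 .
    then have "noRL 2 N ws" using NS ws(1) by simp
    moreover have "length ws = N" "set ws \<subseteq> {0,1,2}" "ws!0 = 0" using ws NS unfolding okw_def by auto
    ultimately show "ws \<in> {ws \<in> W N (1,1). noRL 2 N ws}" unfolding W_def by simp
  qed
qed

lemma numM_11: assumes N: "N \<ge> 3" shows "int (numM N (1,1)) = b (N - 1)"
proof -
  have r: "(1,1) \<in> DV N" using N unfolding DV_def by auto
  have "{ws \<in> W N (1,1). acyclic (Tw N (1,1) ws)} = {ws \<in> W N (1,1). noRL 2 N ws}"
    using caseA[OF N] by blast
  then have "numM N (1,1) = card (Cons 0 ` OK (N-1))" using numM_W[OF N r] setA[OF N] by simp
  also have "\<dots> = card (OK (N-1))" by (rule card_Cons_img)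
  finally show ?thesis using card_OK[of "N-1"] by simp
qed


lemma cycRL: assumes ac: "acyclic (Tw N r ws)" and i: "1 \<le> i" "i < N"
  and rr: "(i,1) \<noteq> r" "(Suc i,1) \<noteq> r" and c: "ws!(i-1) = 2" "ws!i = 1"
  shows False
proof -
  have "((i,1),(Suc i,1)) \<in> Tw N r ws" using stR[of i N r ws] i rr c csuc_lt[of i N] by auto
  moreover have "((Suc i,1),(i,1)) \<in> Tw N r ws" using stL[of "Suc i" N r ws] i rr c cpred_gt1[of "Suc i" N] by auto
  ultimately show False using cyc2[OF ac] by blast
qed

lemma Pgen:
  assumes w: "ws \<in> W N r" and a: "1 \<le> a" and mN: "m \<le> N"
  and base: "((a,1),t) \<in> (Tw N r ws)\<^sup>*"
  and D: "\<And>k. a < k \<Longrightarrow> k \<le> m \<Longrightarrow> ws!(k-1) = 0 \<Longrightarrow> ((k,1),t) \<in> (Tw N r ws)\<^sup>*"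
  and nr: "noRL (Suc a) m ws"
  and rr: "\<And>k. a < k \<Longrightarrow> k \<le> m \<Longrightarrow> (k,1) \<noteq> r"
  shows "a \<le> k \<Longrightarrow> k \<le> m \<Longrightarrow> k = a \<or> ws!(k-1) \<noteq> 2 \<Longrightarrow> ((k,1),t) \<in> (Tw N r ws)\<^sup>*"
proof (induction k)
  case 0 then show ?case using a by simp
next
  case (Suc n)
  show ?case
  proof (cases "Suc n = a")
    case True then show ?thesis using base by simp
  next
    case False
    then have an: "a \<le> n" using Suc by simp
    then have h: "ws!n \<noteq> 2" using Suc False by auto
    have l2: "ws!n \<le> 2" using W_le2[OF w, of "Suc n"] Suc mN by simp
    show ?thesis
    proof (cases "ws!n = 0")
      case True then show ?thesis using D[of "Suc n"] Suc an by simp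
    next
      case F2: False
      then have L: "ws!n = 1" using h l2 by simp
      have n2: "2 \<le> Suc n" using an a by simp
      have "((Suc n,1),(n,1)) \<in> Tw N r ws"
        using stL[of "Suc n" N r ws] Suc.prems L cpred_gt1[OF n2, of N] rr[of "Suc n"] an mN by simp
      moreover have "n = a \<or> ws!(n-1) \<noteq> 2" using nr L Suc.prems an unfolding noRL_def by auto
      then have "((n,1),t) \<in> (Tw N r ws)\<^sup>*" using Suc an by simp
      ultimately show ?thesis by (rule converse_rtrancl_into_rtrancl)
    qed
  qed
qed

lemma Qgen:
  assumes w: "ws \<in> W N r" and a: "1 \<le> a" and mN: "m \<le> N"
  and top: "ws!(m-1) \<noteq> 1 \<Longrightarrow> ((m,1),t) \<in> (Tw N r ws)\<^sup>*"
  and D: "\<And>k. a \<le> k \<Longrightarrow> k < m \<Longrightarrow> ws!(k-1) = 0 \<Longrightarrow> ((k,1),t) \<in> (Tw N r ws)\<^sup>*"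
  and nr: "noRL a m ws"
  and rr: "\<And>k. a \<le> k \<Longrightarrow> k < m \<Longrightarrow> (k,1) \<noteq> r"
  shows "a \<le> k \<Longrightarrow> k \<le> m \<Longrightarrow> ws!(k-1) \<noteq> 1 \<Longrightarrow> ((k,1),t) \<in> (Tw N r ws)\<^sup>*"
proof (induction "m - k" arbitrary: k)
  case 0
  then have "k = m" by simp
  then show ?case using top 0 by simp
next
  case (Suc d n)
  then have nm: "n < m" by simp
  have l2: "ws!(n-1) \<le> 2" using W_le2[OF w, of n] Suc a mN by simp
  show ?case
  proof (cases "ws!(n-1) = 0")
    case True then show ?thesis using D[of n] Suc.prems nm by simp
  next
    case False
    then have R: "ws!(n-1) = 2" using Suc.prems l2 by simp
    have "((n,1),(Suc n,1)) \<in> Tw N r ws"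
      using stR[of n N r ws] Suc.prems R csuc_lt[of n N] rr[of n] nm mN a by simp
    moreover have "ws!(Suc n - 1) \<noteq> 1" using nr R Suc.prems nm unfolding noRL_def by auto
    then have "((Suc n,1),t) \<in> (Tw N r ws)\<^sup>*" using Suc.hyps(1)[of "Suc n"] Suc.hyps(2) Suc.prems nm by simp
    ultimately show ?thesis by (rule converse_rtrancl_into_rtrancl)
  qed
qed


lemma Dreach: assumes N: "N \<ge> 3" and r: "snd r = 1" and k: "1 \<le> k" "k \<le> N" "(k,1) \<noteq> r"
  and z: "ws!(k-1) = 0"
  shows "((k,1),(1,1)) \<in> (Tw N r ws)\<^sup>*"
proof -
  have "((k,1),(k,0)) \<in> Tw N r ws" using stD[of k N r ws] k z by simp
  moreover have "((k,0),(1,1)) \<in> (Tw N r ws)\<^sup>*" using outer_to_11[OF N r] k by simp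
  ultimately show ?thesis by (rule converse_rtrancl_into_rtrancl)
qed

lemma caseB:
  assumes N: "N \<ge> 3" and w: "ws \<in> W N (2,1)"
  shows "acyclic (Tw N (2,1) ws) \<longleftrightarrow>
    ((ws!0 = 2 \<and> noRL 3 N ws) \<or> (ws!0 = 1 \<and> (\<forall>i. 3 \<le> i \<and> i \<le> N \<longrightarrow> ws!(i-1) = 1)))"
    (is "?ac \<longleftrightarrow> ?loc")
proof
  let ?T = "Tw N (2,1) ws"
  assume ac: ?ac
  have n0: "ws!0 \<noteq> 0"
  proof
    assume "ws!0 = 0"
    then have "((1,1),(1,0)) \<in> ?T" using stD[of 1 N "(2,1)" ws] N by simp
    moreover have "((1,0),(1,1)) \<in> ?T" using st0[of 1 N "(2,1)" ws] N unfolding onx_def by simp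
    ultimately show False using cyc2[OF ac] by blast
  qed
  have l2: "ws!0 \<le> 2" using W_le2[OF w, of 1] N by simp
  show ?loc
  proof (cases "ws!0 = 2")
    case True
    have "noRL 3 N ws" unfolding noRL_def
    proof (intro allI impI notI)
      fix i assume "3 \<le> i \<and> i < N" "ws ! (i - 1) = 2 \<and> ws ! i = 1"
      then show False using cycRL[OF ac, of i] by auto
    qed
    then show ?thesis using True by simp
  next
    case False
    then have L1: "ws!0 = 1" using n0 l2 by simp
    have e1: "((1,1),(N,1)) \<in> ?T" using stL[of 1 N "(2,1)" ws] N L1 cpred_1[of N] by simp
    have key: "ws!(i-1) = 1" if i: "3 \<le> i" "i \<le> N" and up: "\<forall>k. i < k \<and> k \<le> N \<longrightarrow> ws!(k-1) = 1" for i
    proof (rule ccontr)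
      assume ne: "ws!(i-1) \<noteq> 1"
      have "((N,1),(i,1)) \<in> ?T\<^sup>*" using chainL[of i N N "(2,1)" ws] i up by auto
      with e1 have ci: "((1,1),(i,1)) \<in> ?T\<^sup>+" by (meson rtrancl_into_trancl2)
      have l2i: "ws!(i-1) \<le> 2" using W_le2[OF w, of i] i by simp
      show False
      proof (cases "ws!(i-1) = 0")
        case True
        have "((i,1),(1,1)) \<in> ?T\<^sup>*" using Dreach[OF N, of "(2,1)" i ws] i True by simp
        with ci have "((1,1),(1,1)) \<in> ?T\<^sup>+" by simp
        then show False using ac unfolding acyclic_def by blast
      next
        case False
        then have R: "ws!(i-1) = 2" using ne l2i by simp
        show False
        proof (cases "i = N")
          case True
          have "((N,1),(1,1)) \<in> ?T" using stR[of N N "(2,1)" ws] N R True csuc_N[of N] by simp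
          then show False using cyc2[OF ac] e1 by blast
        next
          case False
          then have "ws!i = 1" using up[rule_format, of "Suc i"] i by simp
          then show False using cycRL[OF ac, of i] i R False by simp
        qed
      qed
    qed
    have allL: "\<forall>k. i \<le> k \<and> k \<le> N \<longrightarrow> ws!(k-1) = 1" if "3 \<le> i" "i \<le> N" for i
      using that
    proof (induction "N - i" arbitrary: i)
      case 0
      then have "i = N" by simp
      then show ?case using key[of N] 0 by auto
    next
      case (Suc d i)
      then have up: "\<forall>k. Suc i \<le> k \<and> k \<le> N \<longrightarrow> ws!(k-1) = 1"
      proof -
        have "d = N - Suc i" "3 \<le> Suc i" "Suc i \<le> N" using Suc.hyps(2) Suc.prems by auto
        then show ?thesis using Suc.hyps(1)[of "Suc i"] by blast
      qed
      then have wi: "ws!(i-1) = 1" using key[of i] Suc.prems by auto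
      show ?case
      proof (intro allI impI)
        fix k assume "i \<le> k \<and> k \<le> N"
        then show "ws!(k-1) = 1" using up wi by (cases "k = i") auto
      qed
    qed
    show ?thesis using L1 allL by blast
  qed
next
  let ?T = "Tw N (2,1) ws"
  assume loc: ?loc
  have R11: "((1,1),(2,1)) \<in> ?T\<^sup>*"
  proof (cases "ws!0 = 2")
    case True
    have "((1,1),(2,1)) \<in> ?T" using stR[of 1 N "(2,1)" ws] N True csuc_lt[of 1 N] by (simp add: numeral_2_eq_2)
    then show ?thesis by simp
  next
    case False
    then have L1: "ws!0 = 1" and allL: "\<forall>i. 3 \<le> i \<and> i \<le> N \<longrightarrow> ws!(i-1) = 1" using loc by auto
    have "((1,1),(N,1)) \<in> ?T" using stL[of 1 N "(2,1)" ws] N L1 cpred_1[of N] by simp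
    moreover have "((N,1),(2,1)) \<in> ?T\<^sup>*" using chainL[of 2 N N "(2,1)" ws] N allL by auto
    ultimately show ?thesis by (rule converse_rtrancl_into_rtrancl)
  qed
  have DR: "((k,1),(2,1)) \<in> ?T\<^sup>*" if "1 \<le> k" "k \<le> N" "(k,1) \<noteq> (2,1)" "ws!(k-1) = 0" for k
    using Dreach[OF N, of "(2,1)" k ws] that R11 by simp
  have inner: "((i,1),(2,1)) \<in> ?T\<^sup>*" if i: "1 \<le> i" "i \<le> N" for i
  proof (cases "i \<le> 2")
    case True
    then have "i = 1 \<or> i = 2" using i by auto
    then show ?thesis using R11 by auto
  next
    case False
    show ?thesis
    proof (cases "ws!0 = 2")
      case F2: False
      then have allL: "\<forall>i. 3 \<le> i \<and> i \<le> N \<longrightarrow> ws!(i-1) = 1" using loc by auto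
      show ?thesis using chainL[of 2 i N "(2,1)" ws] allL i False by auto
    next
      case True
      then have nr: "noRL 3 N ws" using loc by auto
      have P: "((k,1),(2,1)) \<in> ?T\<^sup>*" if "2 \<le> k" "k \<le> N" "k = 2 \<or> ws!(k-1) \<noteq> 2" for k
        by (rule Pgen[OF w, of 2 N "(2,1)"]) (use DR nr that in \<open>auto simp: numeral_3_eq_3\<close>)
      have Q: "((k,1),(2,1)) \<in> ?T\<^sup>*" if "3 \<le> k" "k \<le> N" "ws!(k-1) \<noteq> 1" for k
      proof (rule Qgen[OF w, of 3 N "(2,1)"])
        show "ws!(N-1) \<noteq> 1 \<Longrightarrow> ((N,1),(2,1)) \<in> ?T\<^sup>*"
        proof -
          assume h: "ws!(N-1) \<noteq> 1"
          have l2: "ws!(N-1) \<le> 2" using W_le2[OF w, of N] N by simp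
          show ?thesis
          proof (cases "ws!(N-1) = 0")
            case True then show ?thesis using DR[of N] N by simp
          next
            case False
            then have "ws!(N-1) = 2" using h l2 by simp
            then have "((N,1),(1,1)) \<in> ?T" using stR[of N N "(2,1)" ws] N csuc_N[of N] by simp
            then show ?thesis using R11 by simp
          qed
        qed
      qed (use DR nr that in auto)
      have l2: "ws!(i-1) \<le> 2" using W_le2[OF w, of i] i by simp
      show ?thesis using P[of i] Q[of i] i False by (cases "ws!(i-1) = 2") auto
    qed
  qed
  show ?ac
  proof (rule reach_acyclic)
    show "\<And>v w w'. (v,w) \<in> ?T \<Longrightarrow> (v,w') \<in> ?T \<Longrightarrow> w = w'" by (rule Tw_sv)
    show "\<And>w. ((2,1),w) \<notin> ?T" by (simp add: Tw_mem)
    fix v w assume vw: "(v,w) \<in> ?T"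
    obtain i n where v: "v = (i,n)" by (cases v)
    have i: "1 \<le> i" "i \<le> N" "n = 0 \<or> n = 1" using vw unfolding v Tw_mem by auto
    show "(v,(2,1)) \<in> ?T\<^sup>*"
    proof (cases "n = 0")
      case True
      have "((i,0),(1,1)) \<in> ?T\<^sup>*" using outer_to_11[OF N, of "(2,1)" i ws] i by simp
      then show ?thesis using R11 True v by simp
    next
      case False
      then show ?thesis using inner[OF i(1,2)] i v by simp
    qed
  qed
qed


lemma noRL_Cons3: "noRL 3 (Suc (Suc m)) (x#y#u) \<longleftrightarrow> noRL 1 m u"
proof -
  have "noRL (Suc 2) (Suc (Suc m)) (x#y#u) \<longleftrightarrow> noRL 2 (Suc m) (y#u)" by (rule noRL_Cons) simp
  then show ?thesis using noRL_Cons2 by (simp add: numeral_3_eq_3)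
qed

lemma allc_replicate: "length u = m \<Longrightarrow> (\<forall>j<m. u!j = c) \<longleftrightarrow> u = replicate m c"
  by (auto simp: list_eq_iff_nth_eq)

lemma setB: assumes N: "N \<ge> 3"
  shows "{ws \<in> W N (2,1). (ws!0 = 2 \<and> noRL 3 N ws) \<or> (ws!0 = 1 \<and> (\<forall>i. 3 \<le> i \<and> i \<le> N \<longrightarrow> ws!(i-1) = 1))}
     = Cons 2 ` Cons 0 ` OK (N-2) \<union> {1#0#replicate (N-2) 1}" (is "?L = ?R")
proof
  show "?L \<subseteq> ?R"
  proof
    fix ws assume "ws \<in> ?L"
    then have w: "length ws = N" "set ws \<subseteq> {0,1,2}" "ws!1 = 0"
      and loc: "(ws!0 = 2 \<and> noRL 3 N ws) \<or> (ws!0 = 1 \<and> (\<forall>i. 3 \<le> i \<and> i \<le> N \<longrightarrow> ws!(i-1) = 1))"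
      unfolding W_def by auto
    obtain x y u where ws: "ws = x#y#u" using N w(1) by (cases ws; cases "tl ws") auto
    have NS: "N = Suc (Suc (length u))" using w ws by simp
    have y: "y = 0" using w ws by simp
    have su: "set u \<subseteq> {0,1,2}" using w(2) ws by simp
    show "ws \<in> ?R"
    proof (cases "x = 2")
      case True
      then have "noRL 3 (Suc (Suc (length u))) (x#y#u)" using loc ws NS by simp
      then have "noRL 1 (length u) u" unfolding noRL_Cons3 .
      then have "u \<in> OK (N-2)" using su NS unfolding OK_def okw_def by simp
      then show ?thesis using ws y True by blast
    next
      case False
      then have x1: "x = 1" and al: "\<forall>i. 3 \<le> i \<and> i \<le> N \<longrightarrow> ws!(i-1) = 1" using loc ws by auto
      have "\<forall>j<length u. u!j = 1"
      proof (intro allI impI)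
        fix j assume "j < length u"
        then show "u!j = 1" using al[rule_format, of "j+3"] ws NS by (simp add: numeral_3_eq_3)
      qed
      then have "u = replicate (N-2) 1" using allc_replicate[of u "length u" 1] NS by simp
      then show ?thesis using ws x1 y by simp
    qed
  qed
  show "?R \<subseteq> ?L"
  proof
    fix ws assume "ws \<in> ?R"
    then consider u where "ws = 2#0#u" "u \<in> OK (N-2)" | "ws = 1#0#replicate (N-2) 1" by blast
    then show "ws \<in> ?L"
    proof cases
      case 1
      then have NS: "N = Suc (Suc (length u))" and ok: "okw u" using N unfolding OK_def by auto
      have "noRL 3 N ws" unfolding 1 NS noRL_Cons3 using ok unfolding okw_def by simp
      moreover have "length ws = N" "set ws \<subseteq> {0,1,2}" using 1 NS ok unfolding okw_def by auto
      ultimately show ?thesis using 1 unfolding W_def by simp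
    next
      case 2
      have "\<forall>i. 3 \<le> i \<and> i \<le> N \<longrightarrow> ws!(i-1) = 1"
      proof (intro allI impI)
        fix i assume i: "3 \<le> i \<and> i \<le> N"
        then obtain j where "i = j + 3" by (metis add.commute le_Suc_ex)
        then show "ws!(i-1) = 1" using 2 i by (simp add: numeral_3_eq_3)
      qed
      moreover have "length ws = N" "set ws \<subseteq> {0,1,2}" using 2 N by auto
      ultimately show ?thesis using 2 unfolding W_def by simp
    qed
  qed
qed

lemma numM_21: assumes N: "N \<ge> 3" shows "int (numM N (2,1)) = b (N - 2) + 1"
proof -
  have r: "(2,1) \<in> DV N" using N unfolding DV_def by auto
  have "{ws \<in> W N (2,1). acyclic (Tw N (2,1) ws)} =
     {ws \<in> W N (2,1). (ws!0 = 2 \<and> noRL 3 N ws) \<or> (ws!0 = 1 \<and> (\<forall>i. 3 \<le> i \<and> i \<le> N \<longrightarrow> ws!(i-1) = 1))}"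
    using caseB[OF N] by blast
  then have "numM N (2,1) = card (Cons 2 ` Cons 0 ` OK (N-2) \<union> {1#0#replicate (N-2) 1})"
    using numM_W[OF N r] setB[OF N] by simp
  also have "\<dots> = card (Cons 2 ` Cons 0 ` OK (N-2)) + 1"
    using finite_OK by (subst card_Un_disjoint) auto
  also have "card (Cons 2 ` Cons 0 ` OK (N-2)) = card (OK (N-2))" by (simp add: card_Cons_img)
  finally show ?thesis using card_OK[of "N-2"] by simp
qed


definition locC :: "nat \<Rightarrow> nat list \<Rightarrow> bool" where
  "locC N ws \<longleftrightarrow>
    (ws!0 = 1 \<and> ws!(N-1) = 1 \<and> noRL 2 (N-1) ws \<and> ws!(N-2) \<noteq> 2 \<and>
        \<not> (\<forall>i. 2 \<le> i \<and> i \<le> N-1 \<longrightarrow> ws!(i-1) = 1))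
  \<or> (ws!0 = 2 \<and> ws!1 \<noteq> 1 \<and> noRL 2 N ws \<and>
        \<not> ((\<forall>i. 2 \<le> i \<and> i \<le> N-1 \<longrightarrow> ws!(i-1) = 2) \<and> ws!(N-1) \<noteq> 1))"

lemma C_outer:
  assumes N: "N \<ge> 3"
  shows "((1,0),(1,1)) \<in> Tw N (2,0) ws"
    and "((N,0),(1,1)) \<in> (Tw N (2,0) ws)\<^sup>*"
    and "2 \<le> i \<Longrightarrow> i \<le> N-1 \<Longrightarrow> ((i,0),(2,0)) \<in> (Tw N (2,0) ws)\<^sup>*"
proof -
  show o1: "((1,0),(1,1)) \<in> Tw N (2,0) ws" using st0[of 1 N "(2,0)" ws] N unfolding onx_def by simp
  have "((N,0),(1,0)) \<in> Tw N (2,0) ws" using st0[of N N "(2,0)" ws] N unfolding onx_def by simp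
  then show "((N,0),(1,1)) \<in> (Tw N (2,0) ws)\<^sup>*" using o1 by simp
  assume "2 \<le> i" "i \<le> N-1"
  then show "((i,0),(2,0)) \<in> (Tw N (2,0) ws)\<^sup>*" using chain0[of 2 i N "(2,0)" ws] N by auto
qed

lemma C_D:
  assumes N: "N \<ge> 3" and k: "2 \<le> k" "k \<le> N-1" and z: "ws!(k-1) = 0"
  shows "((k,1),(2,0)) \<in> (Tw N (2,0) ws)\<^sup>*"
proof -
  have "((k,1),(k,0)) \<in> Tw N (2,0) ws" using stD[of k N "(2,0)" ws] k z by simp
  then show ?thesis using C_outer(3)[OF N k] by (rule converse_rtrancl_into_rtrancl)
qed

lemma caseC_fwd:
  assumes N: "N \<ge> 3" and w: "ws \<in> W N (2,0)" and ac: "acyclic (Tw N (2,0) ws)"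
  shows "locC N ws"
proof -
  let ?T = "Tw N (2,0) ws"
  have o1: "((1,0),(1,1)) \<in> ?T" and oN: "((N,0),(1,1)) \<in> ?T\<^sup>*" using C_outer[OF N] by auto
  have n0: "ws!0 \<noteq> 0"
  proof
    assume "ws!0 = 0"
    then have "((1,1),(1,0)) \<in> ?T" using stD[of 1 N "(2,0)" ws] N by simp
    then show False using cyc2[OF ac] o1 by blast
  qed
  have l2: "ws!0 \<le> 2" using W_le2[OF w, of 1] N by simp
  have l2N: "ws!(N-1) \<le> 2" using W_le2[OF w, of N] N by simp
  have NR: "((N,1),(1,1)) \<in> ?T\<^sup>+" if "ws!(N-1) \<noteq> 1"
  proof (cases "ws!(N-1) = 0")
    case True
    then have "((N,1),(N,0)) \<in> ?T" using stD[of N N "(2,0)" ws] N by simp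
    then show ?thesis using oN by (meson rtrancl_into_trancl2)
  next
    case False
    then have "ws!(N-1) = 2" using that l2N by simp
    then have "((N,1),(1,1)) \<in> ?T" using stR[of N N "(2,0)" ws] N csuc_N[of N] by simp
    then show ?thesis by simp
  qed
  have nrl: "\<not> (ws!(i-1) = 2 \<and> ws!i = 1)" if "1 \<le> i" "i < N" for i
    using cycRL[OF ac, of i] that by auto
  show ?thesis
  proof (cases "ws!0 = 1")
    case True
    have e1: "((1,1),(N,1)) \<in> ?T" using stL[of 1 N "(2,0)" ws] N True cpred_1[of N] by simp
    have wN: "ws!(N-1) = 1"
    proof (rule ccontr)
      assume "ws!(N-1) \<noteq> 1"
      then have "((N,1),(1,1)) \<in> ?T\<^sup>+" by (rule NR)
      then have "((1,1),(1,1)) \<in> ?T\<^sup>+" using e1 by (meson trancl_into_trancl2)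
      then show False using ac unfolding acyclic_def by blast
    qed
    have "noRL 2 (N-1) ws" unfolding noRL_def using nrl by auto
    moreover have "ws!(N-2) \<noteq> 2"
    proof -
      have e: "N-1-1 = N-2" "N - 1 < N" "1 \<le> N - 1" using N by auto
      show ?thesis using nrl[OF e(3) e(2)] wN unfolding e(1) by simp
    qed
    moreover have "\<not> (\<forall>i. 2 \<le> i \<and> i \<le> N-1 \<longrightarrow> ws!(i-1) = 1)"
    proof
      assume al: "\<forall>i. 2 \<le> i \<and> i \<le> N-1 \<longrightarrow> ws!(i-1) = 1"
      have "((N,1),(1,1)) \<in> ?T\<^sup>*"
      proof (rule chainL)
        fix k assume "1 < k" "k \<le> N"
        then show "(k,1::nat) \<noteq> (2,0) \<and> ws!(k-1) = 1" using al wN by (cases "k = N") auto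
      qed (use N in auto)
      then have "((1,1),(1,1)) \<in> ?T\<^sup>+" using e1 by (meson rtrancl_into_trancl2)
      then show False using ac unfolding acyclic_def by blast
    qed
    ultimately show ?thesis unfolding locC_def using True wN by simp
  next
    case False
    then have R1: "ws!0 = 2" using n0 l2 by simp
    have "ws!1 \<noteq> 1" using nrl[of 1] R1 N by simp
    moreover have "noRL 2 N ws" unfolding noRL_def using nrl by auto
    moreover have "\<not> ((\<forall>i. 2 \<le> i \<and> i \<le> N-1 \<longrightarrow> ws!(i-1) = 2) \<and> ws!(N-1) \<noteq> 1)"
    proof
      assume h: "(\<forall>i. 2 \<le> i \<and> i \<le> N-1 \<longrightarrow> ws!(i-1) = 2) \<and> ws!(N-1) \<noteq> 1"
      have "((1,1),(N,1)) \<in> ?T\<^sup>*"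
      proof (rule chainR)
        fix k assume "1 \<le> k" "k < N"
        then show "(k,1::nat) \<noteq> (2,0) \<and> ws!(k-1) = 2" using h R1 by (cases "k = 1") auto
      qed (use N in auto)
      moreover have "((N,1),(1,1)) \<in> ?T\<^sup>+" using NR h by blast
      ultimately have "((1,1),(1,1)) \<in> ?T\<^sup>+" by (meson rtrancl_trancl_trancl)
      then show False using ac unfolding acyclic_def by blast
    qed
    ultimately show ?thesis unfolding locC_def using R1 by simp
  qed
qed


lemma caseC_bwd:
  assumes N: "N \<ge> 3" and w: "ws \<in> W N (2,0)" and loc: "locC N ws"
  shows "acyclic (Tw N (2,0) ws)"
proof -
  let ?T = "Tw N (2,0) ws"
  let ?t = "(2::nat,0::nat)"
  have o1: "((1,0),(1,1)) \<in> ?T" and oN: "((N,0),(1,1)) \<in> ?T\<^sup>*" using C_outer[OF N] by auto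
  have lw: "ws!(k-1) \<le> 2" if "1 \<le> k" "k \<le> N" for k using W_le2[OF w] that by simp
  have DN: "((N,1),?t) \<in> ?T\<^sup>*" if z: "ws!(N-1) = 0" and R11: "((1,1),?t) \<in> ?T\<^sup>*"
  proof -
    have "((N,1),(N,0)) \<in> ?T" using stD[of N N "(2,0)" ws] N z by simp
    then have "((N,1),(1,1)) \<in> ?T\<^sup>*" using oN by (meson converse_rtrancl_into_rtrancl)
    then show ?thesis using R11 by simp
  qed
  have R11: "((1,1),?t) \<in> ?T\<^sup>*" and inner: "\<And>i. 2 \<le> i \<Longrightarrow> i \<le> N \<Longrightarrow> ((i,1),?t) \<in> ?T\<^sup>*"
  proof -
    have "((1,1),?t) \<in> ?T\<^sup>* \<and> (\<forall>i. 2 \<le> i \<and> i \<le> N \<longrightarrow> ((i,1),?t) \<in> ?T\<^sup>*)"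
    proof (cases "ws!0 = 2")
      case True
      have w1: "ws!1 \<noteq> 1" and nr: "noRL 2 N ws"
        and na: "\<not> ((\<forall>i. 2 \<le> i \<and> i \<le> N-1 \<longrightarrow> ws!(i-1) = 2) \<and> ws!(N-1) \<noteq> 1)"
        using loc True unfolding locC_def by auto
      define P where "P j \<longleftrightarrow> 2 \<le> j \<and> j \<le> N-1 \<and> ws!(j-1) \<noteq> 2" for j
      have exP: "\<exists>j. P j"
      proof (rule ccontr)
        assume "\<not> (\<exists>j. P j)"
        then have al: "\<forall>i. 2 \<le> i \<and> i \<le> N-1 \<longrightarrow> ws!(i-1) = 2" unfolding P_def by auto
        then have "ws!(N-1) = 1" using na by simp
        moreover have "ws!(N-1-1) = 2" using al[rule_format, of "N-1"] N by simp
        moreover have "2 \<le> N-1 \<and> N-1 < N" using N by simp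
        ultimately show False using nr unfolding noRL_def by (metis Suc_diff_1 le_less_trans zero_less_two)
      qed
      define j0 where "j0 = (LEAST j. P j)"
      have Pj0: "P j0" unfolding j0_def using exP by (metis LeastI_ex)
      have bef: "\<not> P k" if "k < j0" for k using not_less_Least[of k P] that unfolding j0_def by simp
      have j0: "2 \<le> j0" "j0 \<le> N-1" "ws!(j0-1) \<noteq> 2" using Pj0 unfolding P_def by auto
      have c2: "((2,1),(j0,1)) \<in> ?T\<^sup>*"
      proof (rule chainR)
        fix k assume k: "2 \<le> k" "k < j0"
        then show "(k,1::nat) \<noteq> (2,0) \<and> ws!(k-1) = 2" using bef[OF k(2)] j0 unfolding P_def by auto
      qed (use j0 in auto)
      have z: "ws!(j0-1) = 0"
      proof -
        have "ws!(j0-1) \<noteq> 1"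
        proof
          assume h: "ws!(j0-1) = 1"
          show False
          proof (cases "j0 = 2")
            case True then show False using h w1 by simp
          next
            case False
            then have "ws!(j0-1-1) = 2" using bef[of "j0-1"] j0 unfolding P_def by auto
            moreover have "2 \<le> j0 - 1" "j0 - 1 < N" using False j0 by auto
            ultimately show False using nr h j0 unfolding noRL_def
              by (metis Suc_diff_1 le_less_trans zero_less_two)
          qed
        qed
        moreover have "1 \<le> j0" "j0 \<le> N" using j0 by auto
        ultimately show ?thesis using j0 lw[of j0] by simp
      qed
      have R21: "((2,1),?t) \<in> ?T\<^sup>*" using c2 C_D[OF N j0(1,2) z] by simp
      have "((1,1),(2,1)) \<in> ?T" using stR[of 1 N "(2,0)" ws] N True csuc_lt[of 1 N] by (simp add: numeral_2_eq_2)
      then have R11: "((1,1),?t) \<in> ?T\<^sup>*" using R21 by (meson converse_rtrancl_into_rtrancl)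
      have D: "((k,1),?t) \<in> ?T\<^sup>*" if "2 \<le> k" "k \<le> N" "ws!(k-1) = 0" for k
      proof (cases "k = N")
        case True then show ?thesis using DN[OF _ R11] that by simp
      next
        case False then show ?thesis using C_D[OF N, of k ws] that by simp
      qed
      have nr3: "noRL 3 N ws" using nr noRL_split[of 2 3 N ws] N by simp
      have P2: "((k,1),?t) \<in> ?T\<^sup>*" if "2 \<le> k" "k \<le> N" "k = 2 \<or> ws!(k-1) \<noteq> 2" for k
        by (rule Pgen[OF w, of 2 N ?t]) (use R21 D nr3 that in \<open>auto simp: numeral_3_eq_3\<close>)
      have Q2: "((k,1),?t) \<in> ?T\<^sup>*" if "2 \<le> k" "k \<le> N" "ws!(k-1) \<noteq> 1" for k
      proof (rule Qgen[OF w, of 2 N ?t])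
        show "ws!(N-1) \<noteq> 1 \<Longrightarrow> ((N,1),?t) \<in> ?T\<^sup>*"
        proof -
          assume h: "ws!(N-1) \<noteq> 1"
          show ?thesis
          proof (cases "ws!(N-1) = 0")
            case True then show ?thesis using DN R11 by simp
          next
            case False
            then have "ws!(N-1) = 2" using h lw[of N] N by simp
            then have "((N,1),(1,1)) \<in> ?T" using stR[of N N "(2,0)" ws] N csuc_N[of N] by simp
            then show ?thesis using R11 by (meson converse_rtrancl_into_rtrancl)
          qed
        qed
      qed (use D nr that in auto)
      show ?thesis
      proof (intro conjI allI impI)
        show "((1,1),?t) \<in> ?T\<^sup>*" by (rule R11)
        fix i assume i: "2 \<le> i \<and> i \<le> N"
        then show "((i,1),?t) \<in> ?T\<^sup>*" using P2[of i] Q2[of i] by (cases "ws!(i-1) = 2") auto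
      qed
    next
      case False
      then have L1: "ws!0 = 1" and wN: "ws!(N-1) = 1" and nr: "noRL 2 (N-1) ws"
        and wN2: "ws!(N-2) \<noteq> 2" and na: "\<not> (\<forall>i. 2 \<le> i \<and> i \<le> N-1 \<longrightarrow> ws!(i-1) = 1)"
        using loc unfolding locC_def by auto
      define P where "P j \<longleftrightarrow> 2 \<le> j \<and> j \<le> N-1 \<and> ws!(j-1) \<noteq> 1" for j
      have exP: "\<exists>j. P j" using na unfolding P_def by auto
      have bnd: "\<forall>y. P y \<longrightarrow> y \<le> N" unfolding P_def by auto
      define j0 where "j0 = (GREATEST j. P j)"
      have Pj0: "P j0" unfolding j0_def using exP bnd by (metis GreatestI_nat)
      have aft: "\<not> P k" if "j0 < k" for k using Greatest_le_nat[of P k N] bnd that unfolding j0_def by auto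
      have j0: "2 \<le> j0" "j0 \<le> N-1" "ws!(j0-1) \<noteq> 1" using Pj0 unfolding P_def by auto
      have c2: "((N-1,1),(j0,1)) \<in> ?T\<^sup>*"
      proof (rule chainL)
        fix k assume k: "j0 < k" "k \<le> N-1"
        then show "(k,1::nat) \<noteq> (2,0) \<and> ws!(k-1) = 1" using aft[OF k(1)] j0 unfolding P_def by auto
      qed (use j0 in auto)
      have z: "ws!(j0-1) = 0"
      proof -
        have "ws!(j0-1) \<noteq> 2"
        proof
          assume h: "ws!(j0-1) = 2"
          show False
          proof (cases "j0 = N-1")
            case True then show False using h wN2 by (simp add: numeral_2_eq_2)
          next
            case False
            then have "ws!j0 = 1" using aft[of "Suc j0"] j0 unfolding P_def by auto
            moreover have "2 \<le> j0" "j0 < N-1" using False j0 by auto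
            ultimately show False using nr h unfolding noRL_def by blast
          qed
        qed
        moreover have "1 \<le> j0" "j0 \<le> N" using j0 by auto
        ultimately show ?thesis using j0 lw[of j0] by simp
      qed
      have RN1: "((N-1,1),?t) \<in> ?T\<^sup>*" using c2 C_D[OF N j0(1,2) z] by simp
      have eN: "((N,1),(N-1,1)) \<in> ?T" using stL[of N N "(2,0)" ws] N wN cpred_gt1[of N N] by simp
      then have RN: "((N,1),?t) \<in> ?T\<^sup>*" using RN1 by (meson converse_rtrancl_into_rtrancl)
      have "((1,1),(N,1)) \<in> ?T" using stL[of 1 N "(2,0)" ws] N L1 cpred_1[of N] by simp
      then have R11: "((1,1),?t) \<in> ?T\<^sup>*" using RN by (meson converse_rtrancl_into_rtrancl)
      have D: "((k,1),?t) \<in> ?T\<^sup>*" if "2 \<le> k" "k \<le> N-1" "ws!(k-1) = 0" for k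
        using C_D[OF N, of k ws] that by simp
      have P2: "((k,1),?t) \<in> ?T\<^sup>*" if "1 \<le> k" "k \<le> N-1" "k = 1 \<or> ws!(k-1) \<noteq> 2" for k
        by (rule Pgen[OF w, of 1 "N-1" ?t]) (use R11 D nr that in \<open>auto simp: numeral_2_eq_2\<close>)
      have Q2: "((k,1),?t) \<in> ?T\<^sup>*" if "2 \<le> k" "k \<le> N-1" "ws!(k-1) \<noteq> 1" for k
      proof (rule Qgen[OF w, of 2 "N-1" ?t])
        show "ws!(N-1-1) \<noteq> 1 \<Longrightarrow> ((N-1,1),?t) \<in> ?T\<^sup>*" by (rule RN1)
      qed (use D nr that in auto)
      show ?thesis
      proof (intro conjI allI impI)
        show "((1,1),?t) \<in> ?T\<^sup>*" by (rule R11)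
        fix i assume i: "2 \<le> i \<and> i \<le> N"
        show "((i,1),?t) \<in> ?T\<^sup>*"
        proof (cases "i = N")
          case True then show ?thesis using RN by simp
        next
          case False
          then show ?thesis using P2[of i] Q2[of i] i by (cases "ws!(i-1) = 2") auto
        qed
      qed
    qed
    then show "((1,1),?t) \<in> ?T\<^sup>*" "\<And>i. 2 \<le> i \<Longrightarrow> i \<le> N \<Longrightarrow> ((i,1),?t) \<in> ?T\<^sup>*" by auto
  qed
  show ?thesis
  proof (rule reach_acyclic)
    show "\<And>v w w'. (v,w) \<in> ?T \<Longrightarrow> (v,w') \<in> ?T \<Longrightarrow> w = w'" by (rule Tw_sv)
    show "\<And>w. (?t,w) \<notin> ?T" by (simp add: Tw_mem)
    fix v w assume vw: "(v,w) \<in> ?T"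
    obtain i n where v: "v = (i,n)" by (cases v)
    have i: "1 \<le> i" "i \<le> N" "n = 0 \<or> n = 1" "(i,n) \<noteq> ?t" using vw unfolding v Tw_mem by auto
    show "(v,?t) \<in> ?T\<^sup>*"
    proof (cases "n = 0")
      case True
      show ?thesis
      proof (cases "i = 1")
        case True
        then show ?thesis using o1 R11 v \<open>n = 0\<close> by (meson converse_rtrancl_into_rtrancl)
      next
        case F1: False
        show ?thesis
        proof (cases "i = N")
          case True then show ?thesis using oN R11 v \<open>n = 0\<close> by simp
        next
          case False
          then show ?thesis using C_outer(3)[OF N, of i ws] i F1 v \<open>n = 0\<close> by simp
        qed
      qed
    next
      case False
      then show ?thesis using inner[of i] R11 i v by (cases "i = 1") auto
    qed
  qed
qed


lemma caseC: "N \<ge> 3 \<Longrightarrow> ws \<in> W N (2,0) \<Longrightarrow> acyclic (Tw N (2,0) ws) \<longleftrightarrow> locC N ws"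
  using caseC_fwd caseC_bwd by blast

lemma okw_no1: "set u \<subseteq> {0,2} \<Longrightarrow> okw u"
  unfolding okw_def noRL_def using nth_mem by fastforce

lemma setC: assumes N: "N = Suc (Suc m)" "m \<ge> 1"
  shows "{ws \<in> W N (2,0). locC N ws} =
     (\<lambda>u. 1 # u @ [1]) ` ({u\<in>OK m. last u \<noteq> 2} - {replicate m 1})
   \<union> Cons 2 ` ({u\<in>OK (Suc m). hd u \<noteq> 1} - {replicate m 2 @ [2], replicate m 2 @ [0]})"
  (is "?L = ?A \<union> ?B")
proof -
  have W0: "ws \<in> W N (2,0) \<longleftrightarrow> length ws = N \<and> set ws \<subseteq> {0,1,2}" for ws unfolding W_def by simp
  have BL: "noRL 2 (N-1) (1#u@[1]) \<longleftrightarrow> noRL 1 m u" 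
    and BL2: "(1#u@[1])!(N-2) = last u"
    and BL3: "(\<forall>i. 2 \<le> i \<and> i \<le> N-1 \<longrightarrow> (1#u@[1])!(i-1) = 1) \<longleftrightarrow> u = replicate m 1"
    and BL4: "(1#u@[1])!(N-1) = 1"
    if lu: "length u = m" for u
  proof -
    have "noRL 2 (Suc m) (1#(u@[1])) \<longleftrightarrow> noRL 1 m (u@[1])" by (rule noRL_Cons2)
    also have "\<dots> \<longleftrightarrow> noRL 1 m u" by (rule noRL_append) (simp add: lu)
    finally show "noRL 2 (N-1) (1#u@[1]) \<longleftrightarrow> noRL 1 m u" using N by simp
    have "u \<noteq> []" using lu N by auto
    then show "(1#u@[1])!(N-2) = last u" using lu N
      by (cases m) (auto simp: nth_append last_conv_nth)
    show "(1#u@[1])!(N-1) = 1" using lu N by (simp add: nth_append)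
    have "(\<forall>i. 2 \<le> i \<and> i \<le> N-1 \<longrightarrow> (1#u@[1])!(i-1) = 1) \<longleftrightarrow> (\<forall>j<m. u!j = 1)"
    proof
      assume h: "\<forall>i. 2 \<le> i \<and> i \<le> N-1 \<longrightarrow> (1#u@[1])!(i-1) = 1"
      show "\<forall>j<m. u!j = 1"
      proof (intro allI impI)
        fix j assume "j < m"
        then show "u!j = 1" using h[rule_format, of "j+2"] lu N by (simp add: nth_append)
      qed
    next
      assume h: "\<forall>j<m. u!j = 1"
      show "\<forall>i. 2 \<le> i \<and> i \<le> N-1 \<longrightarrow> (1#u@[1])!(i-1) = 1"
      proof (intro allI impI)
        fix i assume i: "2 \<le> i \<and> i \<le> N-1"
        then obtain j where ij: "i = j + 2" by (metis add.commute le_Suc_ex)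
        then show "(1#u@[1])!(i-1) = 1" using h i lu N by (simp add: nth_append)
      qed
    qed
    then show "(\<forall>i. 2 \<le> i \<and> i \<le> N-1 \<longrightarrow> (1#u@[1])!(i-1) = 1) \<longleftrightarrow> u = replicate m 1"
      using allc_replicate[OF lu] by simp
  qed
  have BR: "noRL 2 N (2#u) \<longleftrightarrow> noRL 1 (Suc m) u"
    and BR3: "((\<forall>i. 2 \<le> i \<and> i \<le> N-1 \<longrightarrow> (2#u)!(i-1) = 2) \<and> (2#u)!(N-1) \<noteq> 1) \<longleftrightarrow>
               u \<in> {replicate m 2 @ [2], replicate m 2 @ [0]}"
    if lu: "length u = Suc m" and su: "set u \<subseteq> {0,1,2}" for u
  proof -
    show "noRL 2 N (2#u) \<longleftrightarrow> noRL 1 (Suc m) u" using noRL_Cons2[of "Suc m" 2 u] N by simp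
    have e1: "(\<forall>i. 2 \<le> i \<and> i \<le> N-1 \<longrightarrow> (2#u)!(i-1) = 2) \<longleftrightarrow> (\<forall>j<m. u!j = 2)"
    proof
      assume h: "\<forall>i. 2 \<le> i \<and> i \<le> N-1 \<longrightarrow> (2#u)!(i-1) = 2"
      show "\<forall>j<m. u!j = 2"
      proof (intro allI impI)
        fix j assume "j < m"
        then show "u!j = 2" using h[rule_format, of "j+2"] lu N by simp
      qed
    next
      assume h: "\<forall>j<m. u!j = 2"
      show "\<forall>i. 2 \<le> i \<and> i \<le> N-1 \<longrightarrow> (2#u)!(i-1) = 2"
      proof (intro allI impI)
        fix i assume i: "2 \<le> i \<and> i \<le> N-1"
        then obtain j where ij: "i = j + 2" by (metis add.commute le_Suc_ex)
        then show "(2#u)!(i-1) = 2" using h i lu N by simp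
      qed
    qed
    have e2: "(2#u)!(N-1) = u!m" using N by simp
    have um: "u!m \<le> 2" using nth_le2[OF su, of m] lu by simp
    have e3: "u = replicate m c @ [d] \<longleftrightarrow> (\<forall>j<m. u!j = c) \<and> u!m = d" for c d
      using lu by (auto simp: list_eq_iff_nth_eq nth_append less_Suc_eq)
    show "((\<forall>i. 2 \<le> i \<and> i \<le> N-1 \<longrightarrow> (2#u)!(i-1) = 2) \<and> (2#u)!(N-1) \<noteq> 1) \<longleftrightarrow>
               u \<in> {replicate m 2 @ [2], replicate m 2 @ [0]}"
      unfolding e1 e2 using e3[of 2 2] e3[of 2 0] um by auto
  qed
  show ?thesis
  proof
    show "?L \<subseteq> ?A \<union> ?B"
    proof
      fix ws assume "ws \<in> ?L"
      then have lw: "length ws = N" and sw: "set ws \<subseteq> {0,1,2}" and loc: "locC N ws" using W0 by auto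
      obtain x v where ws: "ws = x#v" using lw N by (cases ws) auto
      have lv: "length v = Suc m" using lw ws N by simp
      have sv: "set v \<subseteq> {0,1,2}" using sw ws by simp
      show "ws \<in> ?A \<union> ?B"
      proof (cases "x = 1")
        case True
        obtain u y where v: "v = u@[y]" using lv by (cases v rule: rev_cases) auto
        have lu: "length u = m" using lv v by simp
        have su: "set u \<subseteq> {0,1,2}" using sv v by simp
        have y: "y = 1" using loc True ws v lu N unfolding locC_def by (simp add: nth_append)
        have ws': "ws = 1#u@[1]" using ws v y True by simp
        have L: "noRL 1 m u" "last u \<noteq> 2" "u \<noteq> replicate m 1"
          using loc unfolding locC_def ws' using BL[OF lu] BL2[OF lu] BL3[OF lu] by auto
        have "u \<in> {u\<in>OK m. last u \<noteq> 2} - {replicate m 1}"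
          using L lu su unfolding OK_def okw_def by simp
        then show ?thesis using ws' by blast
      next
        case False
        then have x2: "x = 2" and R: "ws!1 \<noteq> 1" "noRL 2 N ws"
          "\<not> ((\<forall>i. 2 \<le> i \<and> i \<le> N-1 \<longrightarrow> ws!(i-1) = 2) \<and> ws!(N-1) \<noteq> 1)"
          using loc ws unfolding locC_def by auto
        have "noRL 1 (Suc m) v" using R(2) BR[OF lv sv] ws x2 by simp
        moreover have "hd v \<noteq> 1" using R(1) ws lv by (cases v) auto
        moreover have "v \<notin> {replicate m 2 @ [2], replicate m 2 @ [0]}"
        proof -
          have "\<not> ((\<forall>i. 2 \<le> i \<and> i \<le> N-1 \<longrightarrow> (2#v)!(i-1) = 2) \<and> (2#v)!(N-1) \<noteq> 1)"
            using R(3) unfolding ws x2 .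
          then show ?thesis using BR3[OF lv sv] by blast
        qed
        ultimately have "v \<in> {u\<in>OK (Suc m). hd u \<noteq> 1} - {replicate m 2 @ [2], replicate m 2 @ [0]}"
          using lv sv unfolding OK_def okw_def by simp
        then show ?thesis using ws x2 by blast
      qed
    qed
    show "?A \<union> ?B \<subseteq> ?L"
    proof
      fix ws assume "ws \<in> ?A \<union> ?B"
      then consider u where "ws = 1#u@[1]" "u \<in> OK m" "last u \<noteq> 2" "u \<noteq> replicate m 1"
        | u where "ws = 2#u" "u \<in> OK (Suc m)" "hd u \<noteq> 1" "u \<notin> {replicate m 2 @ [2], replicate m 2 @ [0]}"
        by blast
      then show "ws \<in> ?L"
      proof cases
        case 1
        then have lu: "length u = m" and ok: "okw u" unfolding OK_def by auto
        have "locC N ws" unfolding locC_def 1(1)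
          using BL[OF lu] BL2[OF lu] BL3[OF lu] BL4[OF lu] 1 ok N lu unfolding okw_def by simp
        moreover have "length ws = N" "set ws \<subseteq> {0,1,2}" using 1 lu ok N unfolding okw_def by auto
        ultimately show ?thesis using W0 by simp
      next
        case 2
        then have lu: "length u = Suc m" and ok: "okw u" unfolding OK_def by auto
        have su: "set u \<subseteq> {0,1,2}" using ok unfolding okw_def by simp
        have "(2#u)!1 = hd u" using lu by (cases u) auto
        then have "locC N ws" unfolding locC_def 2(1)
          using BR[OF lu su] BR3[OF lu su] 2 ok N lu unfolding okw_def by simp
        moreover have "length ws = N" "set ws \<subseteq> {0,1,2}" using 2 lu ok N unfolding okw_def by auto
        ultimately show ?thesis using W0 by simp
      qed
    qed
  qed
qed


lemma okw_no2: assumes s: "set u \<subseteq> {0,1}" shows "okw u"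
proof -
  have "u!j \<noteq> 2" if "j < length u" for j
  proof -
    have "u!j \<in> {0,1}" using s nth_mem[OF that] by blast
    then show ?thesis by auto
  qed
  then show ?thesis using s unfolding okw_def noRL_def by auto
qed

lemma int_card_Diff: assumes "finite A" "B \<subseteq> A" shows "int (card (A - B)) = int (card A) - int (card B)"
proof -
  have "finite B" using assms finite_subset by blast
  have le: "card B \<le> card A" by (rule card_mono[OF assms])
  have "card (A - B) = card A - card B" by (rule card_Diff_subset[OF \<open>finite B\<close> assms(2)])
  then show ?thesis using le by (simp add: of_nat_diff)
qed

lemma int_card_nlast2: "int (card {u\<in>OK (Suc n). last u \<noteq> 2}) = b (Suc n) - b n"
proof -
  have "int (card {u\<in>OK (Suc n). last u \<noteq> 2}) = int (card (OK (Suc n))) - int (card (OK n))"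
    using card_OK_nlast2[of n] card_OK_le[of n] by (simp add: of_nat_diff)
  then show ?thesis by (simp only: card_OK)
qed

lemma int_card_nhd1: "int (card {u\<in>OK (Suc n). hd u \<noteq> 1}) = b (Suc n) - b n"
proof -
  have "int (card {u\<in>OK (Suc n). hd u \<noteq> 1}) = int (card (OK (Suc n))) - int (card (OK n))"
    using card_OK_nhd1'[of n] card_OK_le[of n] by (simp add: of_nat_diff)
  then show ?thesis by (simp only: card_OK)
qed

lemma numM_20: assumes N3: "N \<ge> 3" shows "int (numM N (2,0)) = 2 * b (N-1) - 3 * b (N-2) - 3"
proof -
  define k where "k = N - 3"
  have Nk: "N = Suc (Suc (Suc k))" using N3 unfolding k_def by simp
  define m where "m = Suc k"
  have N: "N = Suc (Suc m)" "m \<ge> 1" using Nk m_def by auto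
  have r: "(2,0) \<in> DV N" using N3 unfolding DV_def by auto
  let ?A0 = "{u\<in>OK m. last u \<noteq> 2} - {replicate m 1}"
  let ?B0 = "{u\<in>OK (Suc m). hd u \<noteq> 1} - {replicate m 2 @ [2], replicate m 2 @ [0]}"
  have "{ws \<in> W N (2,0). acyclic (Tw N (2,0) ws)} = {ws \<in> W N (2,0). locC N ws}"
    using caseC[OF N3] by blast
  then have e: "numM N (2,0) = card ((\<lambda>u. 1 # u @ [1]) ` ?A0 \<union> Cons 2 ` ?B0)"
    using numM_W[OF N3 r] setC[OF N] by simp
  have fA: "finite ?A0" "finite ?B0" using finite_OK by auto
  have "card ((\<lambda>u. 1 # u @ [1]) ` ?A0 \<union> Cons 2 ` ?B0) = card ((\<lambda>u. 1 # u @ [1]) ` ?A0) + card (Cons 2 ` ?B0)"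
  proof (rule card_Un_disjoint)
    show "finite ((\<lambda>u. 1 # u @ [1]) ` ?A0)" using fA by blast
    show "finite (Cons 2 ` ?B0)" using fA by blast
    have "\<And>x. x \<in> (\<lambda>u. 1 # u @ [1]) ` ?A0 \<Longrightarrow> hd x = 1" by auto
    moreover have "\<And>x. x \<in> Cons 2 ` ?B0 \<Longrightarrow> hd x = 2" by auto
    ultimately show "(\<lambda>u. 1 # u @ [1]) ` ?A0 \<inter> Cons 2 ` ?B0 = {}" by fastforce
  qed
  also have "card ((\<lambda>u. 1 # u @ [1]) ` ?A0) = card ?A0"
    by (rule card_image) (simp add: inj_on_def)
  also have "card (Cons 2 ` ?B0) = card ?B0" by (rule card_Cons_img)
  finally have e2: "numM N (2,0) = card ?A0 + card ?B0" using e by simp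
  have r1: "replicate m 1 \<in> {u\<in>OK m. last u \<noteq> 2}"
  proof -
    have "okw (replicate m 1)" by (rule okw_no2) (auto simp: set_replicate_conv_if)
    moreover have "last (replicate m (1::nat)) = 1" using N by simp
    ultimately show ?thesis unfolding OK_def by simp
  qed
  have "int (card ?A0) = int (card {u\<in>OK m. last u \<noteq> 2}) - 1"
    using int_card_Diff[of "{u\<in>OK m. last u \<noteq> 2}" "{replicate m 1}"] r1 finite_OK by simp
  also have "\<dots> = b m - b k - 1" unfolding m_def int_card_nlast2 ..
  finally have cA: "int (card ?A0) = b m - b k - 1" .
  have r2: "{replicate m 2 @ [2], replicate m 2 @ [0]} \<subseteq> {u\<in>OK (Suc m). hd u \<noteq> 1}"
  proof -
    have "okw (replicate m 2 @ [2])" by (rule okw_no1) (auto simp: set_replicate_conv_if)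
    moreover have "okw (replicate m 2 @ [0])" by (rule okw_no1) (auto simp: set_replicate_conv_if)
    moreover have "hd (replicate m 2 @ [c]) = (2::nat)" for c using N by (cases m) auto
    ultimately show ?thesis unfolding OK_def by simp
  qed
  have c2: "card {replicate m 2 @ [2], replicate m 2 @ [0::nat]} = 2" by simp
  have "int (card ?B0) = int (card {u\<in>OK (Suc m). hd u \<noteq> 1}) - 2"
    using int_card_Diff[OF _ r2] finite_OK c2 by simp
  also have "\<dots> = b (Suc m) - b m - 2" unfolding int_card_nhd1 ..
  finally have cB: "int (card ?B0) = b (Suc m) - b m - 2" .
  have rec: "b (Suc m) = 3 * b m - b k" unfolding m_def by simp
  have "int (numM N (2,0)) = b m - b k - 1 + (b (Suc m) - b m - 2)" using e2 cA cB by simp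
  also have "\<dots> = 2 * b (Suc m) - 3 * b m - 3" using rec by simp
  finally show ?thesis using N by simp
qed

lemma b_facts: "b n \<ge> 1 \<and> b (Suc n) - b n \<ge> 2"
proof (induction n)
  case 0 then show ?case by simp
next
  case (Suc n)
  then show ?case by simp
qed

theorem mainTheorem2:
  fixes N :: nat
  assumes "N \<ge> 3"
  shows "int (numM N (1,1)) = b (N - 1)
       \<and> int (numM N (2,1)) = b (N - 2) + 1
       \<and> int (numM N (2,0)) = 2 * b (N - 1) - 3 * b (N - 2) - 3
       \<and> int (numM N (2,1)) + int (numM N (2,0)) - int (numM N (1,1))
           = b (N - 1) - 2 * b (N - 2) - 2
       \<and> (N = 3 \<longrightarrow> int (numM N (2,1)) + int (numM N (2,0)) - int (numM N (1,1)) = 0)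
       \<and> (N \<ge> 4 \<longrightarrow> int (numM N (2,1)) + int (numM N (2,0)) - int (numM N (1,1)) > 0)"
proof -
  have a: "int (numM N (1,1)) = b (N - 1)" by (rule numM_11[OF assms])
  have c: "int (numM N (2,1)) = b (N - 2) + 1" by (rule numM_21[OF assms])
  have d: "int (numM N (2,0)) = 2 * b (N - 1) - 3 * b (N - 2) - 3" by (rule numM_20[OF assms])
  have e: "int (numM N (2,1)) + int (numM N (2,0)) - int (numM N (1,1)) = b (N - 1) - 2 * b (N - 2) - 2"
    using a c d by simp
  have f: "N = 3 \<longrightarrow> int (numM N (2,1)) + int (numM N (2,0)) - int (numM N (1,1)) = 0"
  proof
    assume N3: "N = 3"
    have "b (N - 1) - 2 * b (N - 2) - 2 = 0" unfolding N3 by (simp add: numeral_3_eq_3 numeral_2_eq_2)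
    then show "int (numM N (2,1)) + int (numM N (2,0)) - int (numM N (1,1)) = 0" using e by simp
  qed
  have g: "N \<ge> 4 \<longrightarrow> int (numM N (2,1)) + int (numM N (2,0)) - int (numM N (1,1)) > 0"
  proof
    assume N4: "N \<ge> 4"
    define n where "n = N - 4"
    have n: "N = Suc (Suc (Suc (Suc n)))" using N4 unfolding n_def by simp
    have "b (Suc (Suc (Suc n))) - 2 * b (Suc (Suc n)) - 2 = (b (Suc (Suc n)) - b (Suc n)) - 2 + b (Suc n) - b (Suc n)"
      by simp
    moreover have "b (Suc (Suc n)) - b (Suc n) = (b (Suc n) - b n) + b (Suc n)" by simp
    moreover have "b (Suc n) - b n \<ge> 2" "b (Suc n) \<ge> 1" using b_facts[of n] b_facts[of "Suc n"] by auto
    ultimately have "b (Suc (Suc (Suc n))) - 2 * b (Suc (Suc n)) - 2 > 0" by simp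
    then show "int (numM N (2,1)) + int (numM N (2,0)) - int (numM N (1,1)) > 0" using e n by simp
  qed
  show ?thesis using a c d e f g by blast
qed


end
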